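(* Assume (A1). Let $W_1,W_2,\dots$ be i.i.d. copies of $V$. Then, as $n/K\to\infty$, $$\sum_{k=0}^{\infty}b^k\,\mathbf P\Big(n\prod_{j=1}^{k}W_j\ge K\Big)=(\mu^{-1}+o(1))\frac nK .$$ Equivalently, the expected number of vertices $v$ of $S_b$ with $M_v^n\ge K$ is $(\mu^{-1}+o(1))\,n/K$.
   Context: $b\ge2$ is an integer and $\mathcal V=(V_1,\dots,V_b)$ is a random vector with $V_i\ge0$, $\sum_iV_i=1$ and identically distributed components; $V$ has their common law. $S_b$ is the infinite rooted tree in which each vertex has $b$ children labelled $1,\dots,b$, and each vertex $u$ carries an independent copy $\mathcal V_u$ of $\mathcal V$. For a vertex $v$ at depth $d$ with path root $=u_0,u_1,\dots,u_d=v$, where $u_j$ is the $i_j$-th child of $u_{j-1}$, let $W_{j,v}$ be the $i_j$-th component of $\mathcal V_{u_{j-1}}$, and $M_v^n:=n\prod_{j=1}^dW_{j,v}$ (empty product $=1$). $\mu:=b\,\mathbf E(-V\ln V)$. Assumption (A1): $\mathbf P(V=0)=\mathbf P(V=1)=0$ and $-\ln V$ has a non-lattice distribution. *)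

theory Defs
  imports "HOL-Probability.Probability"
begin

definition lattice_law :: "real measure \<Rightarrow> bool" where
  "lattice_law N \<longleftrightarrow>
     (\<exists>a h. h > 0 \<and> (AE x in N. \<exists>z::int. x = a + h * of_int z))"

end

theory Submission
  imports Defs
begin


locale renewal = prob_space rho for rho :: "real measure" +
  fixes b :: real
  assumes sets_rho[measurable_cong]: "sets rho = sets borel"
    and pos: "AE x in rho. x > 0"
    and b_ge: "b \<ge> 1"
    and g_int: "(\<integral>x. b * exp (-x) \<partial>rho) = 1"
begin

definition g :: "real \<Rightarrow> real" where "g x = b * exp (-x)"

definition T :: "(real \<Rightarrow> real) \<Rightarrow> real \<Rightarrow> real" where
  "T h t = (\<integral>x. g x * h (t - x) \<partial>rho)"

lemma space_rho: "space rho = UNIV"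
  using sets_eq_imp_space_eq[OF sets_rho] by simp

lemma meas_rho: "(f::real\<Rightarrow>real) \<in> borel_measurable rho \<longleftrightarrow> f \<in> borel_measurable borel"
  by (subst measurable_cong_sets[OF sets_rho refl]) simp

lemma g_meas[measurable]: "g \<in> borel_measurable borel"
  unfolding g_def by measurable

lemma g_pos: "g x > 0"
  using b_ge by (simp add: g_def)

lemma g_le: "AE x in rho. g x \<le> b"
  using pos by eventually_elim (use b_ge in \<open>auto simp: g_def\<close>)

lemma integral_g: "(\<integral>x. g x \<partial>rho) = 1"
  using g_int by (simp add: g_def)

lemma integrable_g: "integrable rho g"
proof (rule integrable_const_bound[where B=b])
  show "AE x in rho. norm (g x) \<le> b"
    using g_le by eventually_elim (use g_pos in \<open>auto simp: less_imp_le\<close>)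
qed (simp add: meas_rho)

lemma integrand_meas:
  assumes [measurable]: "h \<in> borel_measurable borel"
  shows "(\<lambda>x. g x * h (t - x)) \<in> borel_measurable rho"
  unfolding meas_rho by measurable

lemma T_integrable:
  assumes h: "h \<in> borel_measurable borel" and B: "\<And>s. s \<le> t \<Longrightarrow> \<bar>h s\<bar> \<le> B"
  shows "integrable rho (\<lambda>x. g x * h (t - x))"
proof (rule integrable_const_bound[where B="b * B"])
  show "AE x in rho. norm (g x * h (t - x)) \<le> b * B"
    using pos g_le
  proof eventually_elim
    case (elim x)
    have "\<bar>h (t - x)\<bar> \<le> B" using B elim by auto
    moreover have "0 \<le> \<bar>h (t - x)\<bar>" by simp
    ultimately show ?case using elim g_pos[of x]
      by (simp add: abs_mult) (intro mult_mono, auto)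
  qed
qed (rule integrand_meas[OF h])

lemma T_meas:
  assumes [measurable]: "h \<in> borel_measurable borel"
  shows "T h \<in> borel_measurable borel"
proof -
  have "(\<lambda>(t, x). g x * h (t - x)) \<in> borel_measurable (borel \<Otimes>\<^sub>M rho)"
  proof -
    have "(\<lambda>(t, x). g x * h (t - x)) \<in> borel_measurable (borel \<Otimes>\<^sub>M borel)"
      by measurable
    moreover have "sets (borel \<Otimes>\<^sub>M rho) = sets (borel \<Otimes>\<^sub>M (borel :: real measure))"
      by (rule sets_pair_measure_cong) (auto simp: sets_rho)
    ultimately show ?thesis
      using measurable_cong_sets by blast
  qed
  then show ?thesis
    unfolding T_def by (rule borel_measurable_lebesgue_integral)
qed

lemma T_bound:
  assumes h: "h \<in> borel_measurable borel" and B: "\<And>s. s \<le> t \<Longrightarrow> \<bar>h s\<bar> \<le> B"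
  shows "\<bar>T h t\<bar> \<le> B"
proof -
  have "\<bar>T h t\<bar> \<le> (\<integral>x. \<bar>g x * h (t - x)\<bar> \<partial>rho)"
    unfolding T_def by (rule integral_abs_bound)
  also have "\<dots> \<le> (\<integral>x. g x * B \<partial>rho)"
  proof (rule integral_mono_AE)
    show "integrable rho (\<lambda>x. \<bar>g x * h (t - x)\<bar>)"
      using T_integrable[OF h B] by auto
    show "integrable rho (\<lambda>x. g x * B)"
      using integrable_g by auto
    show "AE x in rho. \<bar>g x * h (t - x)\<bar> \<le> g x * B"
      using pos
    proof eventually_elim
      case (elim x)
      then show ?case using B[of "t - x"] g_pos[of x]
        by (simp add: abs_mult)
    qed
  qed
  also have "\<dots> = B" using integral_g by simp
  finally show ?thesis .
qed

lemma T_mono: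
  assumes h1: "h1 \<in> borel_measurable borel" and B1: "\<And>s. s \<le> t \<Longrightarrow> \<bar>h1 s\<bar> \<le> B1"
    and h2: "h2 \<in> borel_measurable borel" and B2: "\<And>s. s \<le> t \<Longrightarrow> \<bar>h2 s\<bar> \<le> B2"
    and le: "\<And>s. s \<le> t \<Longrightarrow> h1 s \<le> h2 s"
  shows "T h1 t \<le> T h2 t"
  unfolding T_def
proof (rule integral_mono_AE[OF T_integrable[OF h1 B1] T_integrable[OF h2 B2]])
  show "AE x in rho. g x * h1 (t - x) \<le> g x * h2 (t - x)"
    using pos by eventually_elim (use le g_pos in \<open>auto intro!: mult_left_mono less_imp_le\<close>)
qed

lemma T_add:
  assumes h1: "h1 \<in> borel_measurable borel" and B1: "\<And>s. s \<le> t \<Longrightarrow> \<bar>h1 s\<bar> \<le> B1"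
    and h2: "h2 \<in> borel_measurable borel" and B2: "\<And>s. s \<le> t \<Longrightarrow> \<bar>h2 s\<bar> \<le> B2"
  shows "T (\<lambda>s. h1 s + h2 s) t = T h1 t + T h2 t"
  unfolding T_def using T_integrable[OF h1 B1] T_integrable[OF h2 B2]
  by (simp add: distrib_left)

lemma T_diff:
  assumes h1: "h1 \<in> borel_measurable borel" and B1: "\<And>s. s \<le> t \<Longrightarrow> \<bar>h1 s\<bar> \<le> B1"
    and h2: "h2 \<in> borel_measurable borel" and B2: "\<And>s. s \<le> t \<Longrightarrow> \<bar>h2 s\<bar> \<le> B2"
  shows "T (\<lambda>s. h1 s - h2 s) t = T h1 t - T h2 t"
  unfolding T_def using T_integrable[OF h1 B1] T_integrable[OF h2 B2]
  by (simp add: right_diff_distrib)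

lemma T_cmult: "T (\<lambda>s. c * h s) t = c * T h t"
  unfolding T_def by (simp add: mult.left_commute)

lemma T_const: "T (\<lambda>s. c) t = c"
  unfolding T_def using integral_g by simp

lemma T_shift: "T (\<lambda>s. h (s + c)) t = T h (t + c)"
  unfolding T_def by (simp add: algebra_simps)

end


context renewal begin

definition Tn :: "nat \<Rightarrow> (real \<Rightarrow> real) \<Rightarrow> real \<Rightarrow> real" where
  "Tn k h = (T ^^ k) h"

lemma Tn_0[simp]: "Tn 0 h = h" by (simp add: Tn_def)
lemma Tn_Suc: "Tn (Suc k) h = T (Tn k h)" by (simp add: Tn_def)
lemma Tn_Suc': "Tn (Suc k) h = Tn k (T h)" by (simp add: Tn_def funpow_swap1)

definition bddm :: "(real \<Rightarrow> real) \<Rightarrow> real \<Rightarrow> bool" where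
  "bddm h B \<longleftrightarrow> h \<in> borel_measurable borel \<and> (\<forall>s. \<bar>h s\<bar> \<le> B)"

lemma bddmD: "bddm h B \<Longrightarrow> h \<in> borel_measurable borel" "bddm h B \<Longrightarrow> \<bar>h s\<bar> \<le> B"
  by (auto simp: bddm_def)

lemma bddmI: "h \<in> borel_measurable borel \<Longrightarrow> (\<And>s. \<bar>h s\<bar> \<le> B) \<Longrightarrow> bddm h B"
  by (auto simp: bddm_def)

lemma T_bddm: "bddm h B \<Longrightarrow> bddm (T h) B"
  by (auto simp: bddm_def intro!: T_meas T_bound)

lemma Tn_bddm: "bddm h B \<Longrightarrow> bddm (Tn k h) B"
  by (induction k) (auto simp: Tn_Suc intro!: T_bddm)

lemma Tn_meas: "h \<in> borel_measurable borel \<Longrightarrow> Tn k h \<in> borel_measurable borel"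
  by (induction k) (auto simp: Tn_Suc intro!: T_meas)

lemma T_add': "bddm h1 B1 \<Longrightarrow> bddm h2 B2 \<Longrightarrow> T (\<lambda>s. h1 s + h2 s) = (\<lambda>s. T h1 s + T h2 s)"
  by (rule ext, rule T_add) (auto simp: bddm_def)

lemma T_diff': "bddm h1 B1 \<Longrightarrow> bddm h2 B2 \<Longrightarrow> T (\<lambda>s. h1 s - h2 s) = (\<lambda>s. T h1 s - T h2 s)"
  by (rule ext, rule T_diff) (auto simp: bddm_def)

lemma Tn_add: "bddm h1 B1 \<Longrightarrow> bddm h2 B2 \<Longrightarrow> Tn k (\<lambda>s. h1 s + h2 s) = (\<lambda>s. Tn k h1 s + Tn k h2 s)"
proof (induction k)
  case (Suc k)
  then show ?case by (simp add: Tn_Suc T_add'[OF Tn_bddm Tn_bddm])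
qed simp

lemma Tn_diff: "bddm h1 B1 \<Longrightarrow> bddm h2 B2 \<Longrightarrow> Tn k (\<lambda>s. h1 s - h2 s) = (\<lambda>s. Tn k h1 s - Tn k h2 s)"
proof (induction k)
  case (Suc k)
  then show ?case by (simp add: Tn_Suc T_diff'[OF Tn_bddm Tn_bddm])
qed simp

lemma Tn_cmult: "Tn k (\<lambda>s. c * h s) = (\<lambda>s. c * Tn k h s)"
proof (induction k)
  case (Suc k)
  then show ?case by (simp add: Tn_Suc T_cmult[abs_def])
qed simp

lemma Tn_const: "Tn k (\<lambda>s. c) = (\<lambda>s. c)"
proof (induction k)
  case (Suc k)
  then show ?case by (simp add: Tn_Suc T_const[abs_def])
qed simp

lemma Tn_shift: "Tn k (\<lambda>s. h (s + c)) = (\<lambda>t. Tn k h (t + c))"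
proof (induction k)
  case (Suc k)
  then show ?case by (simp add: Tn_Suc T_shift[abs_def])
qed simp

lemma bddm_sum: "finite F \<Longrightarrow> (\<And>m. m \<in> F \<Longrightarrow> bddm (h m) (B m)) \<Longrightarrow> bddm (\<lambda>s. \<Sum>m\<in>F. h m s) (\<Sum>m\<in>F. B m)"
  unfolding bddm_def
  by (auto intro!: borel_measurable_sum order.trans[OF sum_abs] sum_mono)

lemma Tn_sum: "finite F \<Longrightarrow> (\<And>m. m \<in> F \<Longrightarrow> bddm (h m) (B m)) \<Longrightarrow>
    Tn k (\<lambda>s. \<Sum>m\<in>F. h m s) = (\<lambda>s. \<Sum>m\<in>F. Tn k (h m) s)"
proof (induction F rule: finite_induct)
  case empty
  then show ?case using Tn_const[of k 0] by simp
next
  case (insert a F)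
  have "Tn k (\<lambda>s. \<Sum>m\<in>insert a F. h m s) = Tn k (\<lambda>s. h a s + (\<Sum>m\<in>F. h m s))"
    using insert by simp
  also have "\<dots> = (\<lambda>s. Tn k (h a) s + Tn k (\<lambda>s. \<Sum>m\<in>F. h m s) s)"
    by (rule Tn_add[OF insert.prems[of a] bddm_sum[OF insert.hyps(1)]]) (use insert.prems in auto)
  also have "\<dots> = (\<lambda>s. \<Sum>m\<in>insert a F. Tn k (h m) s)"
    using insert by simp
  finally show ?case .
qed

lemma T_mono': "bddm h1 B1 \<Longrightarrow> bddm h2 B2 \<Longrightarrow> (\<And>s. s \<le> t \<Longrightarrow> h1 s \<le> h2 s) \<Longrightarrow> T h1 t \<le> T h2 t"
  by (rule T_mono) (auto simp: bddm_def)

lemma Tn_mono: "bddm h1 B1 \<Longrightarrow> bddm h2 B2 \<Longrightarrow> (\<And>s. h1 s \<le> h2 s) \<Longrightarrow> Tn k h1 t \<le> Tn k h2 t"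
proof (induction k arbitrary: t)
  case (Suc k)
  then show ?case by (simp add: Tn_Suc T_mono'[OF Tn_bddm Tn_bddm])
qed simp

lemma bddm_const: "bddm (\<lambda>s. c) \<bar>c\<bar>" by (simp add: bddm_def)

lemma Tn_nonneg: "bddm h B \<Longrightarrow> (\<And>s. 0 \<le> h s) \<Longrightarrow> 0 \<le> Tn k h t"
  using Tn_mono[OF bddm_const[of 0], of h B k t] Tn_const[of k 0] by simp

lemma T_preserves_mono: "bddm h B \<Longrightarrow> mono h \<Longrightarrow> mono (T h)"
proof (rule monoI)
  fix t t' :: real assume h: "bddm h B" "mono h" and "t \<le> t'"
  show "T h t \<le> T h t'"
    unfolding T_def
  proof (rule integral_mono_AE)
    show "integrable rho (\<lambda>x. g x * h (t - x))" "integrable rho (\<lambda>x. g x * h (t' - x))"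
      using h by (auto intro!: T_integrable simp: bddm_def)
    show "AE x in rho. g x * h (t - x) \<le> g x * h (t' - x)"
      by (intro AE_I2 mult_left_mono monoD[OF h(2)] less_imp_le[OF g_pos]) (use \<open>t \<le> t'\<close> in auto)
  qed
qed

lemma Tn_preserves_mono: "bddm h B \<Longrightarrow> mono h \<Longrightarrow> mono (Tn k h)"
  by (induction k) (auto simp: Tn_Suc intro!: T_preserves_mono Tn_bddm)

lemma T_zero_neg: "bddm h B \<Longrightarrow> (\<And>s. s < 0 \<Longrightarrow> h s = 0) \<Longrightarrow> t < 0 \<Longrightarrow> T h t = 0"
  unfolding T_def
  by (rule integral_eq_zero_AE) (use pos in \<open>auto elim!: eventually_mono\<close>)

lemma Tn_zero_neg: "bddm h B \<Longrightarrow> (\<And>s. s < 0 \<Longrightarrow> h s = 0) \<Longrightarrow> t < 0 \<Longrightarrow> Tn k h t = 0"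
proof (induction k arbitrary: t)
  case (Suc k)
  then show ?case by (simp add: Tn_Suc T_zero_neg[OF Tn_bddm])
qed simp

end


context renewal begin

definition q :: real where "q = (\<integral>x. g x * exp (-x) \<partial>rho)"

lemma integrable_gexp: "integrable rho (\<lambda>x. g x * exp (-x))"
proof (rule integrable_const_bound[where B=b])
  show "AE x in rho. norm (g x * exp (-x)) \<le> b"
    using pos g_le
  proof eventually_elim
    case (elim x)
    have "exp (-x) \<le> 1" using elim by simp
    then have "g x * exp (-x) \<le> b * 1" using elim g_pos[of x] b_ge
      by (intro mult_mono) auto
    then show ?case using g_pos[of x] by (simp add: abs_mult)
  qed
qed (simp add: meas_rho)

lemma q_lt1: "q < 1"
proof -
  have "q < (\<integral>x. g x \<partial>rho)"
    unfolding q_def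
  proof (rule integral_less_AE_space[OF integrable_gexp integrable_g])
    show "AE x in rho. g x * exp (-x) < g x"
      using pos by eventually_elim (use g_pos in auto)
  qed (simp add: emeasure_space_1)
  then show ?thesis using integral_g by simp
qed

lemma q_nonneg: "0 \<le> q"
  unfolding q_def by (intro integral_nonneg_AE AE_I2) (use g_pos in \<open>auto intro: less_imp_le\<close>)

lemma T_exp:
  assumes h: "bddm h B" and le: "\<And>s. h s \<le> c * exp s"
  shows "T h t \<le> c * exp t * q"
proof -
  have "T h t \<le> T (\<lambda>s. c * exp s) t"
  proof (rule T_mono[of h t B "\<lambda>s. c * exp s" "\<bar>c\<bar> * exp t"])
    show "\<bar>c * exp s\<bar> \<le> \<bar>c\<bar> * exp t" if "s \<le> t" for s
      using that by (simp add: abs_mult mult_left_mono)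
  qed (use h le in \<open>auto simp: bddm_def\<close>)
  also have "T (\<lambda>s. c * exp s) t = (\<integral>x. (c * exp t) * (g x * exp (-x)) \<partial>rho)"
    unfolding T_def by (intro Bochner_Integration.integral_cong refl) (auto simp: exp_diff field_simps exp_minus)
  also have "\<dots> = c * exp t * q"
    unfolding q_def by simp
  finally show ?thesis .
qed

lemma Tn_exp:
  assumes h: "bddm h B" and le: "\<And>s. h s \<le> c * exp s"
  shows "Tn k h t \<le> c * q ^ k * exp t"
proof (induction k arbitrary: t)
  case 0
  then show ?case using le by simp
next
  case (Suc k)
  have "Tn (Suc k) h t = T (Tn k h) t" by (simp add: Tn_Suc)
  also have "\<dots> \<le> (c * q ^ k) * exp t * q"
    by (rule T_exp[OF Tn_bddm[OF h]]) (use Suc in \<open>simp add: mult.commute\<close>)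
  finally show ?case by (simp add: mult_ac)
qed

definition E :: "real \<Rightarrow> real" where "E s = exp (- max s 0)"

lemma E_pos: "0 < E s" and E_le1: "E s \<le> 1"
  by (auto simp: E_def)

lemma E_meas[measurable]: "E \<in> borel_measurable borel"
  unfolding E_def by measurable

lemma T_E:
  assumes h: "bddm h B" and c: "0 \<le> c" and le: "\<And>s. h s \<le> c * E s"
  shows "T h t \<le> b * c * E t"
proof -
  have bE: "bddm (\<lambda>s. c * E s) c"
    using c E_le1 E_pos by (intro bddmI) (auto simp: abs_mult abs_of_pos[OF E_pos] intro!: mult_left_le)
  have "T h t \<le> T (\<lambda>s. c * E s) t"
    by (rule T_mono'[OF h bE le])
  also have "\<dots> = c * T E t" by (rule T_cmult)
  finally have 1: "T h t \<le> c * T E t" .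
  have "T E t \<le> 1"
    using T_bound[of E t 1] E_le1 E_pos by (auto simp: abs_of_pos)
  moreover have "T E t \<le> (\<integral>x. b * exp (-t) \<partial>rho)"
    unfolding T_def
  proof (rule integral_mono_AE)
    show "integrable rho (\<lambda>x. g x * E (t - x))"
      by (rule T_integrable[where B=1]) (use E_le1 E_pos in \<open>auto simp: abs_of_pos\<close>)
    show "AE x in rho. g x * E (t - x) \<le> b * exp (- t)"
    proof (intro AE_I2)
      fix x
      have "E (t - x) \<le> exp (-(t - x))" by (simp add: E_def)
      then have "g x * E (t - x) \<le> g x * exp (-(t - x))"
        using g_pos[of x] by (simp add: mult_left_mono)
      also have "\<dots> = b * exp (-t)" by (simp add: g_def exp_diff[symmetric] exp_add[symmetric])
      finally show "g x * E (t - x) \<le> b * exp (- t)" .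
    qed
  qed simp
  then have "T E t \<le> b * exp (-t)" by (simp add: prob_space)
  ultimately have "T E t \<le> b * E t"
    using b_ge by (auto simp: E_def max_def)
  with 1 c show ?thesis
    by (metis mult.assoc mult.left_commute mult_left_mono order_trans)
qed

lemma Tn_E:
  assumes h: "bddm h B" and c: "0 \<le> c" and le: "\<And>s. h s \<le> c * E s"
  shows "Tn k h t \<le> b ^ k * c * E t"
proof (induction k arbitrary: t)
  case 0
  then show ?case using le by simp
next
  case (Suc k)
  have "Tn (Suc k) h t = T (Tn k h) t" by (simp add: Tn_Suc)
  also have "\<dots> \<le> b * (b ^ k * c) * E t"
    by (rule T_E[OF Tn_bddm[OF h]]) (use Suc c b_ge in auto)
  finally show ?case by (simp add: mult_ac)
qed

definition Ser :: "(real \<Rightarrow> real) \<Rightarrow> real \<Rightarrow> real" where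
  "Ser h t = (\<Sum>k. Tn k h t)"


context
  fixes h :: "real \<Rightarrow> real"
  assumes h_bddm: "bddm h 1" and h_nonneg: "\<And>s. 0 \<le> h s" and h_exp: "\<And>s. h s \<le> exp s"
begin

lemma Tn_h_le: "Tn k h t \<le> q ^ k * exp t"
  using Tn_exp[OF h_bddm, of 1] h_exp by simp

lemma Tn_h_ge: "0 \<le> Tn k h t"
  by (rule Tn_nonneg[OF h_bddm h_nonneg])

lemma summable_geo_exp: "summable (\<lambda>k. q ^ k * exp t)"
  using q_lt1 q_nonneg by (intro summable_mult2 summable_geometric) auto

lemma Ser_summable: "summable (\<lambda>k. Tn k h t)"
  by (rule summable_comparison_test'[OF summable_geo_exp[of t], of 0])
     (use Tn_h_le Tn_h_ge in auto)

lemma Ser_nonneg: "0 \<le> Ser h t"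
  unfolding Ser_def by (intro suminf_nonneg Ser_summable Tn_h_ge)

lemma Ser_le: "Ser h t \<le> exp t / (1 - q)"
proof -
  have "Ser h t \<le> (\<Sum>k. q ^ k * exp t)"
    unfolding Ser_def by (intro suminf_le Ser_summable summable_geo_exp Tn_h_le)
  also have "\<dots> = exp t / (1 - q)"
    using q_lt1 q_nonneg by (simp add: suminf_mult2[symmetric, OF summable_geometric] suminf_geometric)
  finally show ?thesis .
qed

lemma Ser_meas: "Ser h \<in> borel_measurable borel"
proof -
  have "(\<lambda>t. \<Sum>k. Tn k h t) \<in> borel_measurable borel"
    by (intro borel_measurable_suminf Tn_meas bddmD(1)[OF h_bddm])
  then show ?thesis by (simp add: Ser_def[abs_def])
qed

lemma Ser_eq: "Ser h t = h t + T (Ser h) t"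
proof -
  have int: "integrable rho (\<lambda>x. g x * Tn k h (t - x))" for k
    by (rule T_integrable[where B=1]) (use Tn_bddm[OF h_bddm] in \<open>auto simp: bddm_def\<close>)
  have "T (Ser h) t = (\<integral>x. (\<Sum>k. g x * Tn k h (t - x)) \<partial>rho)"
    unfolding T_def Ser_def
    by (intro Bochner_Integration.integral_cong refl suminf_mult[symmetric] Ser_summable)
  also have "\<dots> = (\<Sum>k. (\<integral>x. g x * Tn k h (t - x) \<partial>rho))"
  proof (rule integral_suminf)
    show "integrable rho (\<lambda>x. g x * Tn k h (t - x))" for k by (rule int)
    show "AE x in rho. summable (\<lambda>k. norm (g x * Tn k h (t - x)))"
      using g_pos Tn_h_ge by (auto intro!: AE_I2 summable_mult Ser_summable simp: abs_mult)
    have "summable (\<lambda>k. Tn (Suc k) h t)"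
      using Ser_summable[of t] by (subst summable_Suc_iff)
    then show "summable (\<lambda>k. \<integral>x. norm (g x * Tn k h (t - x)) \<partial>rho)"
      using g_pos Tn_h_ge by (simp add: abs_mult Tn_Suc T_def abs_of_nonneg less_imp_le)
  qed
  also have "\<dots> = (\<Sum>k. Tn (Suc k) h t)"
    by (simp add: Tn_Suc T_def)
  also have "\<dots> = Ser h t - h t"
    unfolding Ser_def using suminf_split_head[OF Ser_summable[of t]] by simp
  finally show ?thesis by simp
qed

end

end


context renewal begin

definition z :: "real \<Rightarrow> real" where "z s = (if 0 \<le> s then exp (-s) else 0)"
definition H :: "real \<Rightarrow> real" where "H s = (if 0 \<le> s then 1 else 0)"
definition w :: "real \<Rightarrow> real" where "w s = (if 0 \<le> s then 1 - exp (-s) else 0)"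
definition R :: "nat \<Rightarrow> real \<Rightarrow> real" where "R k = Tn k H"
definition phi :: "real \<Rightarrow> real" where "phi = Ser z"
definition Psi :: "real \<Rightarrow> real" where "Psi = Ser w"

lemma z_meas[measurable]: "z \<in> borel_measurable borel" unfolding z_def by measurable
lemma H_meas[measurable]: "H \<in> borel_measurable borel" unfolding H_def by measurable
lemma w_meas[measurable]: "w \<in> borel_measurable borel" unfolding w_def by measurable

lemma z_bddm: "bddm z 1" by (rule bddmI) (auto simp: z_def)
lemma H_bddm: "bddm H 1" by (rule bddmI) (auto simp: H_def)
lemma w_bddm: "bddm w 1" by (rule bddmI) (auto simp: w_def)

lemma z_nonneg: "0 \<le> z s" by (simp add: z_def)
lemma H_nonneg: "0 \<le> H s" by (simp add: H_def)
lemma w_nonneg: "0 \<le> w s" by (simp add: w_def)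

lemma z_exp: "z s \<le> exp s"
  by (simp add: z_def)
lemma H_exp: "H s \<le> exp s" by (simp add: H_def)
lemma w_exp: "w s \<le> exp s"
proof -
  have "0 \<le> s \<Longrightarrow> 1 - exp (-s) \<le> exp s"
    by (smt (verit) exp_ge_zero one_le_exp_iff)
  then show ?thesis by (simp add: w_def)
qed

lemmas z_facts = z_bddm z_nonneg z_exp
lemmas H_facts = H_bddm H_nonneg H_exp
lemmas w_facts = w_bddm w_nonneg w_exp

lemma H_mono: "mono H" by (auto simp: mono_def H_def)

lemma R_bddm: "bddm (R k) 1" unfolding R_def by (rule Tn_bddm[OF H_bddm])
lemma R_mono: "mono (R k)" unfolding R_def by (rule Tn_preserves_mono[OF H_bddm H_mono])
lemma R_nonneg: "0 \<le> R k t" unfolding R_def by (rule Tn_nonneg[OF H_bddm H_nonneg])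
lemma R_le1: "R k t \<le> 1" using bddmD(2)[OF R_bddm, of k t] by simp
lemma R_neg: "t < 0 \<Longrightarrow> R k t = 0" unfolding R_def by (rule Tn_zero_neg[OF H_bddm]) (auto simp: H_def)
lemma R_0: "R 0 = H" by (simp add: R_def)
lemma R_Suc: "R (Suc k) t = (\<integral>x. g x * R k (t - x) \<partial>rho)" by (simp add: R_def Tn_Suc T_def)

lemma exists_delta: "\<exists>\<delta>>0. emeasure rho {\<delta><..} \<noteq> 0"
proof (rule ccontr)
  assume "\<not> ?thesis"
  then have null: "\<And>n. {1 / Suc n <..} \<in> null_sets rho"
    by (auto simp: null_sets_def sets_rho)
  have N: "(\<Union>n. {1 / real (Suc n) <..}) \<in> null_sets rho"
    using null by blast
  have eq: "(\<Union>n. {1 / real (Suc n) <..}) = {0<..}"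
  proof (intro equalityI subsetI)
    fix x :: real assume "x \<in> {0<..}"
    then obtain n where "1 / real (Suc n) < x"
      by (metis Suc_eq_plus1 greaterThan_iff nat_approx_posE)
    then show "x \<in> (\<Union>n. {1 / real (Suc n) <..})" by auto
  next
    fix x assume "x \<in> (\<Union>n. {1 / real (Suc n) <..})"
    then obtain n where "1 / real (Suc n) < x" by auto
    moreover have "0 < 1 / real (Suc n)" by simp
    ultimately have "0 < x" by (meson less_trans) then show "x \<in> {0<..}" by simp
  qed
  have "AE x in rho. x \<notin> {0<..}"
    by (rule AE_I'[OF N]) (use eq in auto)
  with pos have "AE x in rho. False" by eventually_elim auto
  then show False by (simp add: AE_False emeasure_space_1)
qed

definition dlt :: real where "dlt = (SOME d. d > 0 \<and> emeasure rho {d<..} \<noteq> 0)"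

lemma dlt: "dlt > 0" "emeasure rho {dlt<..} \<noteq> 0"
  using someI_ex[OF exists_delta] unfolding dlt_def by auto

lemma integrable_g_mult:
  assumes f[measurable]: "f \<in> borel_measurable borel" and B: "\<And>x. \<bar>f x\<bar> \<le> B"
  shows "integrable rho (\<lambda>x. g x * f x)"
proof (rule integrable_const_bound[where B="b * B"])
  show "AE x in rho. norm (g x * f x) \<le> b * B"
    using g_le
  proof eventually_elim
    case (elim x)
    then show ?case using B[of x] g_pos[of x] by (simp add: abs_mult) (intro mult_mono, auto)
  qed
qed (simp add: meas_rho)

definition beta :: real where "beta = (\<integral>x. g x * indicator {dlt<..} x \<partial>rho)"

lemma integrable_gind: "integrable rho (\<lambda>x. g x * indicator {dlt<..} x)"
  by (rule integrable_g_mult[where B=1]) auto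

lemma beta_pos: "0 < beta"
proof -
  have "(\<integral>x. 0 \<partial>rho) < beta"
    unfolding beta_def
  proof (rule integral_less_AE[where A="{dlt<..}"])
    show "AE x in rho. x \<in> {dlt<..} \<longrightarrow> 0 \<noteq> g x * indicator {dlt<..} x"
      using g_pos by (auto intro!: AE_I2 simp: less_imp_neq)
    show "AE x in rho. 0 \<le> g x * indicator {dlt<..} x"
      using g_pos by (auto intro!: AE_I2 simp: less_imp_le)
  qed (use integrable_gind dlt in \<open>auto simp: sets_rho\<close>)
  then show ?thesis by simp
qed

lemma R_step: "R (Suc k) t \<le> R k t - beta * (R k t - R k (t - dlt))"
proof -
  define d where "d = R k t - R k (t - dlt)"
  have "R (Suc k) t = (\<integral>x. g x * R k (t - x) \<partial>rho)" by (rule R_Suc)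
  also have "\<dots> \<le> (\<integral>x. R k t * g x - d * (g x * indicator {dlt<..} x) \<partial>rho)"
  proof (rule integral_mono_AE)
    show "integrable rho (\<lambda>x. g x * R k (t - x))"
      by (rule T_integrable[where B=1]) (use R_bddm in \<open>auto simp: bddm_def\<close>)
    show "integrable rho (\<lambda>x. R k t * g x - d * (g x * indicator {dlt<..} x))"
      using integrable_g integrable_gind by auto
    show "AE x in rho. g x * R k (t - x) \<le> R k t * g x - d * (g x * indicator {dlt<..} x)"
      using pos
    proof eventually_elim
      case (elim x)
      have "R k (t - x) \<le> R k t - d * indicator {dlt<..} x"
      proof (cases "x > dlt")
        case True
        then have "R k (t - x) \<le> R k (t - dlt)" by (intro monoD[OF R_mono]) simp
        then show ?thesis using True by (simp add: d_def)
      next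
        case False
        then have "R k (t - x) \<le> R k t" using elim by (intro monoD[OF R_mono]) simp
        then show ?thesis using False by simp
      qed
      then have "g x * R k (t - x) \<le> g x * (R k t - d * indicator {dlt<..} x)"
        using g_pos[of x] by (intro mult_left_mono) auto
      then show ?case by (simp add: algebra_simps)
    qed
  qed
  also have "\<dots> = R k t - d * beta"
    using integrable_g integrable_gind integral_g by (simp add: beta_def)
  finally show ?thesis by (simp add: d_def mult.commute)
qed

lemma R_telescope: "beta * (\<Sum>k<N. R k s - R k (s - dlt)) \<le> 1 - R N s"
proof (induction N)
  case 0
  then show ?case using R_le1[of 0 s] by simp
next
  case (Suc N)
  have "beta * (\<Sum>k<Suc N. R k s - R k (s - dlt)) =
      beta * (\<Sum>k<N. R k s - R k (s - dlt)) + beta * (R N s - R N (s - dlt))"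
    by (simp add: distrib_left)
  also have "\<dots> \<le> 1 - R N s + beta * (R N s - R N (s - dlt))"
    using Suc by simp
  also have "\<dots> \<le> 1 - R (Suc N) s"
    using R_step[of N s] by simp
  finally show ?case .
qed

lemma R_sum_bound: "(\<Sum>k<N. R k s - R k (s - dlt)) \<le> 1 / beta"
  using R_telescope[where N=N and s=s] R_nonneg[of N s] beta_pos
  by (simp add: field_simps mult.commute)

definition zdec :: "nat \<Rightarrow> real \<Rightarrow> real" where
  "zdec M s = (\<Sum>m::nat<M. exp (- (real m * dlt)) * (H (s - real m * dlt) - H (s - (real m * dlt + dlt)))) + H (s - real M * dlt)"

lemma z_le_zdec: "z s \<le> zdec M s"
proof -
  have terms: "0 \<le> exp (- (real m * dlt)) * (H (s - real m * dlt) - H (s - (real m * dlt + dlt)))" for m :: nat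
    using dlt by (auto simp: H_def)
  show ?thesis
  proof (cases "s < 0")
    case True
    then show ?thesis using terms by (simp add: zdec_def z_def H_nonneg sum_nonneg)
  next
    case False
    show ?thesis
    proof (cases "real M * dlt \<le> s")
      case True
      then have "z s \<le> H (s - real M * dlt)" by (simp add: z_def H_def)
      then show ?thesis using terms by (simp add: zdec_def sum_nonneg add_increasing)
    next
      case less: False
      define m0 where "m0 = nat \<lfloor>s / dlt\<rfloor>"
      have "real m0 \<le> s / dlt" using False dlt by (simp add: m0_def)
      then have m0a: "m0 * dlt \<le> s" using dlt by (simp add: field_simps)
      have "s / dlt < real m0 + 1" using False dlt by (simp add: m0_def)
      then have m0b: "s < m0 * dlt + dlt" using dlt by (simp add: field_simps)
      have "m0 < M"
      proof (rule ccontr)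
        assume "\<not> m0 < M"
        then have "real M * dlt \<le> m0 * dlt" using dlt by (simp add: mult_right_mono)
        with m0a less show False by simp
      qed
      have "z s \<le> exp (- (m0 * dlt)) * (H (s - m0 * dlt) - H (s - (m0 * dlt + dlt)))"
        using m0a m0b False by (simp add: z_def H_def)
      also have "\<dots> \<le> (\<Sum>m::nat<M. exp (- (real m * dlt)) * (H (s - real m * dlt) - H (s - (real m * dlt + dlt))))"
        by (rule member_le_sum[where i=m0]) (use terms \<open>m0 < M\<close> in auto)
      also have "\<dots> \<le> zdec M s" by (simp add: zdec_def H_nonneg)
      finally show ?thesis .
    qed
  qed
qed

lemma bddm_Hshift: "bddm (\<lambda>s. H (s - c)) 1"
  by (rule bddmI) (auto simp: H_def)

lemma Tn_Hshift: "Tn k (\<lambda>s. H (s - c)) = (\<lambda>t. R k (t - c))"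
  using Tn_shift[of k H "-c"] by (simp add: R_def)

lemma bddm_term: "bddm (\<lambda>s. exp (- (real m * dlt)) * (H (s - real m * dlt) - H (s - (real m * dlt + dlt)))) 1"
proof (rule bddmI)
  show "\<bar>exp (- (real m * dlt)) * (H (s - real m * dlt) - H (s - (real m * dlt + dlt)))\<bar> \<le> 1" for s
  proof -
    have "exp (- (real m * dlt)) \<le> 1" using dlt by simp
    moreover have "\<bar>H (s - real m * dlt) - H (s - (real m * dlt + dlt))\<bar> \<le> 1" by (auto simp: H_def)
    ultimately show ?thesis by (simp add: abs_mult) (intro mult_le_one, auto)
  qed
qed measurable

lemma Tn_term: "Tn k (\<lambda>s. exp (- (real m * dlt)) * (H (s - real m * dlt) - H (s - (real m * dlt + dlt)))) =
   (\<lambda>t. exp (- (real m * dlt)) * (R k (t - real m * dlt) - R k (t - (real m * dlt + dlt))))"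
  by (simp add: Tn_cmult Tn_diff[OF bddm_Hshift bddm_Hshift] Tn_Hshift)

lemma Tn_zdec: "Tn k (zdec M) t = (\<Sum>m::nat<M. exp (- (real m * dlt)) * (R k (t - real m * dlt) - R k (t - (real m * dlt + dlt)))) + R k (t - real M * dlt)"
proof -
  have b1: "bddm (\<lambda>s. \<Sum>m::nat<M. exp (- (real m * dlt)) * (H (s - real m * dlt) - H (s - (real m * dlt + dlt)))) (\<Sum>m::nat<M. 1)"
    by (rule bddm_sum) (auto intro: bddm_term)
  have "Tn k (zdec M) = Tn k (\<lambda>s. (\<Sum>m::nat<M. exp (- (real m * dlt)) * (H (s - real m * dlt) - H (s - (real m * dlt + dlt)))) + H (s - real M * dlt))"
    by (simp add: zdec_def[abs_def])
  also have "\<dots> = (\<lambda>t. Tn k (\<lambda>s. \<Sum>m::nat<M. exp (- (real m * dlt)) * (H (s - real m * dlt) - H (s - (real m * dlt + dlt)))) t + R k (t - real M * dlt))"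
    by (simp add: Tn_add[OF b1 bddm_Hshift] Tn_Hshift)
  also have "\<dots> = (\<lambda>t. (\<Sum>m::nat<M. exp (- (real m * dlt)) * (R k (t - real m * dlt) - R k (t - (real m * dlt + dlt)))) + R k (t - real M * dlt))"
    by (subst Tn_sum[where B="\<lambda>_. 1"]) (auto intro: bddm_term simp: Tn_term)
  finally show ?thesis by simp
qed

lemma zdec_bddm: "bddm (zdec M) (real M + 1)"
proof (rule bddmI)
  show "zdec M \<in> borel_measurable borel" unfolding zdec_def[abs_def] by measurable
  fix s
  have "\<bar>zdec M s\<bar> \<le> (\<Sum>m::nat<M. \<bar>exp (- (real m * dlt)) * (H (s - real m * dlt) - H (s - (real m * dlt + dlt)))\<bar>) + \<bar>H (s - real M * dlt)\<bar>"
    unfolding zdec_def by (rule order.trans[OF abs_triangle_ineq add_mono[OF sum_abs order.refl]])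
  also have "\<dots> \<le> (\<Sum>m::nat<M. 1) + 1"
    by (intro add_mono sum_mono bddmD(2)[OF bddm_term] bddmD(2)[OF bddm_Hshift])
  finally show "\<bar>zdec M s\<bar> \<le> real M + 1" by simp
qed

definition Cphi :: real where "Cphi = 1 / (beta * (1 - exp (- dlt)))"

lemma Cphi_pos: "0 < Cphi"
  using beta_pos dlt by (simp add: Cphi_def)

lemma partial_phi_bound: "(\<Sum>k<N. Tn k z t) \<le> Cphi"
proof -
  obtain M :: nat where M: "t < real M * dlt"
  proof -
    obtain M :: nat where "t / dlt < M" using reals_Archimedean2 by blast
    then have "t < real M * dlt" using dlt by (simp add: field_simps)
    then show ?thesis using that by blast
  qed
  have "(\<Sum>k<N. Tn k z t) \<le> (\<Sum>k<N. Tn k (zdec M) t)"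
    by (intro sum_mono Tn_mono[OF z_bddm zdec_bddm z_le_zdec])
  also have "\<dots> = (\<Sum>k<N. \<Sum>m::nat<M. exp (- (real m * dlt)) * (R k (t - real m * dlt) - R k (t - (real m * dlt + dlt))))"
    using M dlt by (simp add: Tn_zdec R_neg)
  also have "\<dots> = (\<Sum>m::nat<M. exp (- (real m * dlt)) * (\<Sum>k<N. R k (t - real m * dlt) - R k (t - real m * dlt - dlt)))"
    by (subst sum.swap) (simp add: sum_distrib_left algebra_simps)
  also have "\<dots> \<le> (\<Sum>m::nat<M. exp (- (real m * dlt)) * (1 / beta))"
    by (intro sum_mono mult_left_mono R_sum_bound) auto
  also have "\<dots> = (1 / beta) * (\<Sum>m::nat<M. exp (- dlt) ^ m)"
    by (simp add: sum_distrib_left exp_of_nat_mult[symmetric] mult.commute)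
  also have "\<dots> \<le> (1 / beta) * (1 / (1 - exp (- dlt)))"
  proof -
    have "(\<Sum>m::nat<M. exp (- dlt) ^ m) \<le> (\<Sum>m. exp (- dlt) ^ m)"
      using dlt by (intro sum_le_suminf summable_geometric) auto
    also have "\<dots> = 1 / (1 - exp (- dlt))"
      using dlt by (simp add: suminf_geometric)
    finally show ?thesis using beta_pos by (intro mult_left_mono) auto
  qed
  also have "\<dots> = Cphi" by (simp add: Cphi_def)
  finally show ?thesis .
qed

lemma phi_le: "phi t \<le> Cphi"
  unfolding phi_def Ser_def
  by (rule suminf_le_const[OF Ser_summable[OF z_facts] partial_phi_bound])

lemma phi_nonneg: "0 \<le> phi t"
  unfolding phi_def by (rule Ser_nonneg[OF z_facts])

lemma phi_meas[measurable]: "phi \<in> borel_measurable borel"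
  unfolding phi_def by (rule Ser_meas[OF z_facts])

lemma phi_bddm: "bddm phi Cphi"
  using phi_le phi_nonneg by (intro bddmI phi_meas) (simp add: abs_of_nonneg)

lemma phi_eq: "phi t = z t + T phi t"
  unfolding phi_def by (rule Ser_eq[OF z_facts])

end


context renewal begin

lemma T_expmono:
  assumes h: "bddm h B" and m: "mono (\<lambda>s. exp s * h s)"
  shows "mono (\<lambda>t. exp t * T h t)"
proof (rule monoI)
  fix t t' :: real assume tt: "t \<le> t'"
  have eq: "exp u * T h u = (\<integral>x. b * (exp (u - x) * h (u - x)) \<partial>rho)" for u
  proof -
    have "exp u * T h u = (\<integral>x. exp u * (g x * h (u - x)) \<partial>rho)"
      unfolding T_def by simp
    also have "\<dots> = (\<integral>x. b * (exp (u - x) * h (u - x)) \<partial>rho)"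
      by (intro Bochner_Integration.integral_cong refl) (simp add: g_def exp_diff exp_minus field_simps)
    finally show ?thesis .
  qed
  have int: "integrable rho (\<lambda>x. b * (exp (u - x) * h (u - x)))" for u
  proof -
    have "integrable rho (\<lambda>x. exp u * (g x * h (u - x)))"
      using T_integrable[of h u B] h by (auto simp: bddm_def)
    also have "(\<lambda>x. exp u * (g x * h (u - x))) = (\<lambda>x. b * (exp (u - x) * h (u - x)))"
      by (simp add: g_def exp_diff exp_minus field_simps fun_eq_iff)
    finally show ?thesis .
  qed
  show "exp t * T h t \<le> exp t' * T h t'"
    unfolding eq
    by (intro integral_mono_AE int AE_I2 mult_left_mono monoD[OF m]) (use tt b_ge in auto)
qed

lemma Tn_z_expmono: "mono (\<lambda>t. exp t * Tn k z t)"
proof (induction k)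
  case 0
  have "(\<lambda>t. exp t * z t) = H" by (auto simp: z_def H_def fun_eq_iff exp_minus)
  then show ?case using H_mono by simp
next
  case (Suc k)
  then show ?case unfolding Tn_Suc by (rule T_expmono[OF Tn_bddm[OF z_bddm], rotated])
qed

lemma phi_expmono: "mono (\<lambda>t. exp t * phi t)"
proof (rule monoI)
  fix t t' :: real assume "t \<le> t'"
  have "exp t * phi t = (\<Sum>k. exp t * Tn k z t)" for t
    unfolding phi_def Ser_def by (rule suminf_mult[symmetric, OF Ser_summable[OF z_facts]])
  moreover have "(\<Sum>k. exp t * Tn k z t) \<le> (\<Sum>k. exp t' * Tn k z t')"
  proof (rule suminf_le)
    show "exp t * Tn k z t \<le> exp t' * Tn k z t'" for k
      using monoD[OF Tn_z_expmono[of k] \<open>t \<le> t'\<close>] by simp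
  qed (auto intro!: summable_mult Ser_summable[OF z_facts])
  ultimately show "exp t * phi t \<le> exp t' * phi t'" by simp
qed

lemma phi_expmono': "s \<le> t \<Longrightarrow> phi s \<le> exp (t - s) * phi t"
  using monoD[OF phi_expmono, of s t] by (simp add: exp_diff field_simps)

lemma Tn_phi_step: "Tn k phi = (\<lambda>t. Tn k z t + Tn (Suc k) phi t)"
proof -
  have "phi = (\<lambda>s. z s + T phi s)" using phi_eq by (simp add: fun_eq_iff)
  then have "Tn k phi = Tn k (\<lambda>s. z s + T phi s)" by simp
  also have "\<dots> = (\<lambda>t. Tn k z t + Tn k (T phi) t)"
    by (rule Tn_add[OF z_bddm T_bddm[OF phi_bddm]])
  finally show ?thesis by (simp add: Tn_Suc')
qed

lemma phi_iter: "phi t = (\<Sum>i<k. Tn i z t) + Tn k phi t"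
proof (induction k)
  case (Suc k)
  have "Tn k phi t = Tn k z t + Tn (Suc k) phi t"
    by (subst Tn_phi_step) simp
  with Suc show ?case by simp
qed simp

lemma Tn_z_le: "Tn k z t \<le> b ^ k * E t"
proof -
  have "z s \<le> 1 * E s" for s by (simp add: z_def E_def)
  then show ?thesis using Tn_E[OF z_bddm, of 1] by simp
qed

definition mu :: real where "mu = (\<integral>x. g x * x \<partial>rho)"

lemma integrable_gx: "integrable rho (\<lambda>x. g x * x)"
proof (rule integrable_const_bound[where B=b])
  show "AE x in rho. norm (g x * x) \<le> b"
    using pos
  proof eventually_elim
    case (elim x)
    have "x \<le> exp x" using exp_ge_add_one_self[of x] by linarith
    then have "x * exp (-x) \<le> 1" by (simp add: exp_minus field_simps)
    then have "b * (x * exp (-x)) \<le> b" using b_ge by (simp add: mult_left_le)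
    then show ?case using elim b_ge by (simp add: g_def abs_mult mult_ac)
  qed
qed (simp add: meas_rho)

lemma mu_pos: "0 < mu"
proof -
  have "(\<integral>x. 0 \<partial>rho) < mu"
    unfolding mu_def
    by (rule integral_less_AE_space[OF _ integrable_gx]) (use pos g_pos in \<open>auto simp: emeasure_space_1 elim!: eventually_mono\<close>)
  then show ?thesis by simp
qed

lemma tight: "0 < t \<Longrightarrow> 1 - R k t \<le> real k * 2 ^ k * mu / t"
proof (induction k arbitrary: t)
  case 0
  then show ?case by (simp add: R_0 H_def)
next
  case (Suc k)
  have int1: "integrable rho (\<lambda>x. g x * R k (t - x))"
    by (rule T_integrable[where B=1]) (use R_bddm in \<open>auto simp: bddm_def\<close>)
  have "1 - R (Suc k) t = (\<integral>x. g x * (1 - R k (t - x)) \<partial>rho)"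
    using integral_g int1 integrable_g by (simp add: R_Suc right_diff_distrib)
  also have "\<dots> \<le> (\<integral>x. (1 - R k (t / 2)) * g x + (2 / t) * (g x * x) \<partial>rho)"
  proof (rule integral_mono_AE)
    show "integrable rho (\<lambda>x. g x * (1 - R k (t - x)))"
      using int1 integrable_g by (simp add: right_diff_distrib)
    show "integrable rho (\<lambda>x. (1 - R k (t / 2)) * g x + (2 / t) * (g x * x))"
      using integrable_g integrable_gx by auto
    show "AE x in rho. g x * (1 - R k (t - x)) \<le> (1 - R k (t / 2)) * g x + (2 / t) * (g x * x)"
      using pos
    proof eventually_elim
      case (elim x)
      have "1 - R k (t - x) \<le> (1 - R k (t / 2)) + 2 * x / t"
      proof (cases "x \<le> t / 2")
        case True
        then have "R k (t / 2) \<le> R k (t - x)" by (intro monoD[OF R_mono]) simp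
        moreover have "0 \<le> 2 * x / t" using elim Suc by simp
        ultimately show ?thesis by simp
      next
        case False
        then have "1 \<le> 2 * x / t" using Suc by (simp add: field_simps)
        moreover have "0 \<le> R k (t - x)" "R k (t / 2) \<le> 1" by (rule R_nonneg, rule R_le1)
        ultimately show ?thesis by simp
      qed
      then have "g x * (1 - R k (t - x)) \<le> g x * ((1 - R k (t / 2)) + 2 * x / t)"
        using g_pos[of x] by (intro mult_left_mono) auto
      then show ?case by (simp add: algebra_simps)
    qed
  qed
  also have "\<dots> = (1 - R k (t / 2)) + 2 / t * mu"
    using integrable_g integrable_gx integral_g by (simp add: mu_def)
  also have "\<dots> \<le> real k * 2 ^ k * mu / (t / 2) + 2 / t * mu"
    using Suc.IH[of "t/2"] Suc.prems by simp
  also have "\<dots> = (real k * 2 ^ Suc k + 2) * mu / t"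
    by (simp add: field_simps add_divide_distrib)
  also have "\<dots> \<le> (real (Suc k) * 2 ^ Suc k) * mu / t"
  proof -
    have "(2::real) \<le> 2 ^ Suc k" by simp
    then have "real k * 2 ^ Suc k + 2 \<le> real (Suc k) * 2 ^ Suc k" by (simp add: algebra_simps)
    then show ?thesis using mu_pos Suc.prems by (intro divide_right_mono mult_right_mono) auto
  qed
  finally show ?case by simp
qed

end


context renewal begin

lemma w_mono: "mono w"
  by (auto simp: mono_def w_def)

lemma Psi_mono: "mono Psi"
proof (rule monoI)
  fix t t' :: real assume "t \<le> t'"
  show "Psi t \<le> Psi t'"
    unfolding Psi_def Ser_def
  proof (rule suminf_le)
    show "Tn k w t \<le> Tn k w t'" for k
      using monoD[OF Tn_preserves_mono[OF w_bddm w_mono] \<open>t \<le> t'\<close>] .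
  qed (auto intro!: Ser_summable[OF w_facts])
qed

lemma bddm_shift: "bddm f B \<Longrightarrow> bddm (\<lambda>u. f (u - c)) B"
  unfolding bddm_def by auto

lemma w_inc_lower: "0 < h \<Longrightarrow> h * exp (-h) * z (s - h) \<le> w s - w (s - h)"
proof (cases "s < h")
  case True
  assume "0 < h"
  then have "w (s - h) \<le> w s" by (intro monoD[OF w_mono]) simp
  then show ?thesis using True by (simp add: z_def)
next
  case False
  assume h: "0 < h"
  have "h \<le> exp h - 1" using exp_ge_add_one_self[of h] by linarith
  then have "h * exp (-s) \<le> (exp h - 1) * exp (-s)" by (rule mult_right_mono) simp
  also have "\<dots> = exp (-(s - h)) - exp (-s)" by (simp add: algebra_simps exp_add[symmetric])
  moreover have "exp (-h) * exp (h - s) = exp (-s)" by (simp add: exp_add[symmetric])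
  ultimately show ?thesis using False h
    by (simp add: z_def w_def mult.assoc)
qed

lemma w_inc_upper: "0 < h \<Longrightarrow> w s - w (s - h) \<le> h * exp h * z s"
proof -
  assume h: "0 < h"
  consider "s < 0" | "0 \<le> s" "s < h" | "h \<le> s" by linarith
  then show ?thesis
  proof cases
    case 1
    then show ?thesis using h by (simp add: w_def z_def)
  next
    case 2
    have "1 - exp (-s) \<le> s" using exp_ge_add_one_self[of "-s"] by simp
    also have "s \<le> h" using 2 by simp
    also have "h \<le> h * exp (h - s)" using 2 h by simp
    also have "\<dots> = h * exp h * exp (-s)" by (simp add: exp_diff exp_minus field_simps)
    finally show ?thesis using 2 by (simp add: w_def z_def)
  next
    case 3
    have "1 - exp (-h) \<le> h" using exp_ge_add_one_self[of "-h"] by simp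
    then have "(1 - exp (-h)) * exp (h - s) \<le> h * exp (h - s)" by (intro mult_right_mono) auto
    moreover have "(1 - exp (-h)) * exp (h - s) = exp (-(s - h)) - exp (-s)"
      by (simp add: algebra_simps exp_add[symmetric])
    moreover have "h * exp (h - s) = h * exp h * exp (-s)" by (simp add: exp_diff exp_minus field_simps)
    ultimately show ?thesis using 3 h by (simp add: w_def z_def)
  qed
qed

lemma Tn_w_diff: "Tn k (\<lambda>u. w u - w (u - h)) s = Tn k w s - Tn k w (s - h)"
proof -
  have "Tn k (\<lambda>u. w u - w (u - h)) = (\<lambda>s. Tn k w s - Tn k (\<lambda>u. w (u - h)) s)"
    by (rule Tn_diff[OF w_bddm bddm_shift[OF w_bddm]])
  moreover have "Tn k (\<lambda>u. w (u - h)) = (\<lambda>t. Tn k w (t - h))"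
    using Tn_shift[of k w "-h"] by simp
  ultimately show ?thesis by simp
qed

lemma Tn_z_shift: "Tn k (\<lambda>u. c * z (u - h)) s = c * Tn k z (s - h)"
proof -
  have "Tn k (\<lambda>u. z (u - h)) = (\<lambda>t. Tn k z (t - h))"
    using Tn_shift[of k z "-h"] by simp
  then show ?thesis by (simp add: Tn_cmult)
qed

lemma w_le1: "w s \<le> 1" by (simp add: w_def)
lemma z_le1: "z s \<le> 1" by (simp add: z_def)

lemma bddm_wdiff: "bddm (\<lambda>u. w u - w (u - h)) 2"
proof (rule bddmI)
  show "\<bar>w u - w (u - h)\<bar> \<le> 2" for u
    using w_nonneg[of u] w_nonneg[of "u - h"] w_le1[of u] w_le1[of "u - h"] by (simp add: abs_le_iff)
qed measurable

lemma bddm_cz: "bddm (\<lambda>u. c * z (u - h)) \<bar>c\<bar>"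
proof (rule bddmI)
  show "\<bar>c * z (u - h)\<bar> \<le> \<bar>c\<bar>" for u
    using z_nonneg[of "u - h"] z_le1[of "u - h"] by (simp add: abs_mult mult_left_le)
qed measurable

lemma Psi_diff_sum: "Psi s - Psi (s - h) = (\<Sum>k. Tn k w s - Tn k w (s - h))"
  unfolding Psi_def Ser_def
  by (rule suminf_diff) (auto intro!: Ser_summable[OF w_facts])

lemma Psi_inc_lower: "0 < h \<Longrightarrow> h * exp (-h) * phi (s - h) \<le> Psi s - Psi (s - h)"
proof -
  assume h: "0 < h"
  have "h * exp (-h) * phi (s - h) = (\<Sum>k. h * exp (-h) * Tn k z (s - h))"
    unfolding phi_def Ser_def by (rule suminf_mult[symmetric, OF Ser_summable[OF z_facts]])
  also have "\<dots> \<le> (\<Sum>k. Tn k w s - Tn k w (s - h))"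
  proof (rule suminf_le)
    show "h * exp (-h) * Tn k z (s - h) \<le> Tn k w s - Tn k w (s - h)" for k
      using Tn_mono[OF bddm_cz bddm_wdiff w_inc_lower[OF h], of k s]
      by (simp add: Tn_z_shift Tn_w_diff)
    show "summable (\<lambda>k. h * exp (-h) * Tn k z (s - h))"
      by (intro summable_mult Ser_summable[OF z_facts])
    show "summable (\<lambda>k. Tn k w s - Tn k w (s - h))"
      by (intro summable_diff Ser_summable[OF w_facts])
  qed
  also have "\<dots> = Psi s - Psi (s - h)" by (rule Psi_diff_sum[symmetric])
  finally show ?thesis .
qed

lemma Psi_inc_upper: "0 < h \<Longrightarrow> Psi s - Psi (s - h) \<le> h * exp h * phi s"
proof -
  assume h: "0 < h"
  have "Psi s - Psi (s - h) = (\<Sum>k. Tn k w s - Tn k w (s - h))" by (rule Psi_diff_sum)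
  also have "\<dots> \<le> (\<Sum>k. h * exp h * Tn k z (s - 0))"
  proof (rule suminf_le)
    show "Tn k w s - Tn k w (s - h) \<le> h * exp h * Tn k z (s - 0)" for k
      using Tn_mono[OF bddm_wdiff bddm_cz, of h "h * exp h" 0 k s] w_inc_upper[OF h]
      by (simp add: Tn_cmult Tn_w_diff)
    show "summable (\<lambda>k. h * exp h * Tn k z (s - 0))"
      by (intro summable_mult Ser_summable[OF z_facts])
    show "summable (\<lambda>k. Tn k w s - Tn k w (s - h))"
      by (intro summable_diff Ser_summable[OF w_facts])
  qed
  also have "\<dots> = h * exp h * phi s"
    unfolding phi_def Ser_def by (simp add: suminf_mult[OF Ser_summable[OF z_facts]])
  finally show ?thesis .
qed

end


context renewal begin

lemma Psi_nonneg: "0 \<le> Psi t" unfolding Psi_def by (rule Ser_nonneg[OF w_facts])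
lemma Psi_le: "Psi t \<le> exp t / (1 - q)" unfolding Psi_def by (rule Ser_le[OF w_facts])
lemma Psi_meas[measurable]: "Psi \<in> borel_measurable borel" unfolding Psi_def by (rule Ser_meas[OF w_facts])
lemma Psi_eq: "Psi t = w t + T Psi t" unfolding Psi_def by (rule Ser_eq[OF w_facts])

lemma Psi_identity: "(\<integral>x. g x * (Psi t - Psi (t - x)) \<partial>rho) = w t"
proof -
  have int: "integrable rho (\<lambda>x. g x * Psi (t - x))"
  proof (rule T_integrable[where B="exp t / (1 - q)"])
    show "\<bar>Psi s\<bar> \<le> exp t / (1 - q)" if "s \<le> t" for s
    proof -
      have "Psi s \<le> exp s / (1 - q)" by (rule Psi_le)
      also have "\<dots> \<le> exp t / (1 - q)" using that q_lt1 by (intro divide_right_mono) auto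
      finally show ?thesis using Psi_nonneg[of s] by simp
    qed
  qed simp
  have "(\<integral>x. g x * (Psi t - Psi (t - x)) \<partial>rho) = (\<integral>x. Psi t * g x - g x * Psi (t - x) \<partial>rho)"
    by (simp add: algebra_simps)
  also have "\<dots> = Psi t - T Psi t"
    using int integrable_g integral_g by (simp add: T_def)
  also have "\<dots> = w t" using Psi_eq[of t] by simp
  finally show ?thesis .
qed

lemma Psi_telescope: "Psi t - Psi (t - real J * h) = (\<Sum>j<J. Psi (t - real j * h) - Psi (t - real j * h - h))"
proof -
  have "(\<Sum>j<J. (- Psi (t - real (Suc j) * h)) - (- Psi (t - real j * h))) = (- Psi (t - real J * h)) - (- Psi (t - real 0 * h))"
    by (rule sum_lessThan_telescope)
  moreover have "(- Psi (t - real (Suc j) * h)) - (- Psi (t - real j * h)) = Psi (t - real j * h) - Psi (t - real j * h - h)" for j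
    by (simp add: algebra_simps)
  ultimately show ?thesis by simp
qed

lemma Psi_lower_interval:
  assumes h: "0 < h" and c: "0 \<le> c" and phi_ge: "\<And>y. 0 \<le> y \<Longrightarrow> y \<le> T0 \<Longrightarrow> c \<le> phi (t - y)"
    and x: "0 < x" "x \<le> T0"
  shows "(x - h) * exp (-h) * c \<le> Psi t - Psi (t - x)"
proof -
  define J where "J = nat \<lfloor>x / h\<rfloor>"
  have J1: "real J * h \<le> x"
  proof -
    have "real J \<le> x / h" using x h by (simp add: J_def)
    then show ?thesis using h by (simp add: field_simps)
  qed
  have J2: "x - h \<le> real J * h"
  proof -
    have "x / h - 1 \<le> real J" using x h by (simp add: J_def)
    then show ?thesis using h by (simp add: field_simps)
  qed
  have "(x - h) * exp (-h) * c \<le> real J * h * exp (-h) * c"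
    using J2 c by (intro mult_right_mono) auto
  also have "\<dots> = (\<Sum>j<J. h * exp (-h) * c)" by simp
  also have "\<dots> \<le> (\<Sum>j<J. Psi (t - real j * h) - Psi (t - real j * h - h))"
  proof (rule sum_mono)
    fix j assume j: "j \<in> {..<J}"
    have "(real j + 1) * h \<le> real J * h" using j h by (intro mult_right_mono) auto
    then have "c \<le> phi (t - (real j * h + h))"
      using J1 h x by (intro phi_ge) (auto simp: algebra_simps intro!: add_nonneg_nonneg)
    then have "h * exp (-h) * c \<le> h * exp (-h) * phi (t - real j * h - h)"
      using h by (intro mult_left_mono) (auto simp: algebra_simps)
    also have "\<dots> \<le> Psi (t - real j * h) - Psi (t - real j * h - h)"
      by (rule Psi_inc_lower[OF h])
    finally show "h * exp (-h) * c \<le> Psi (t - real j * h) - Psi (t - real j * h - h)" .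
  qed
  also have "\<dots> = Psi t - Psi (t - real J * h)" by (rule Psi_telescope[symmetric])
  also have "\<dots> \<le> Psi t - Psi (t - x)"
    using J1 by (simp add: monoD[OF Psi_mono])
  finally show ?thesis .
qed

lemma Psi_upper_interval:
  assumes h: "0 < h" and c: "0 \<le> c" and phi_le: "\<And>y. 0 \<le> y \<Longrightarrow> y \<le> T0 \<Longrightarrow> phi (t - y) \<le> c"
    and x: "0 < x" "x \<le> T0"
  shows "Psi t - Psi (t - x) \<le> (x + h) * exp h * c"
proof -
  define J where "J = nat \<lceil>x / h\<rceil>"
  have J1: "x \<le> real J * h"
  proof -
    have "x / h \<le> real J" using x h by (simp add: J_def)
    then show ?thesis using h by (simp add: field_simps)
  qed
  have J2: "real J * h < x + h"
  proof -
    have "real J < x / h + 1" using x h by (simp add: J_def) linarith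
    then show ?thesis using h by (simp add: field_simps)
  qed
  have "Psi t - Psi (t - x) \<le> Psi t - Psi (t - real J * h)"
    using J1 by (simp add: monoD[OF Psi_mono])
  also have "\<dots> = (\<Sum>j<J. Psi (t - real j * h) - Psi (t - real j * h - h))" by (rule Psi_telescope)
  also have "\<dots> \<le> (\<Sum>j<J. h * exp h * c)"
  proof (rule sum_mono)
    fix j assume j: "j \<in> {..<J}"
    have "(real j + 1) * h \<le> real J * h" using j h by (intro mult_right_mono) auto
    then have "real j * h < x" using J1 J2 h by (simp add: algebra_simps)
    then have "phi (t - real j * h) \<le> c"
      using h x j by (intro phi_le) (auto intro: mult_nonneg_nonneg)
    have "Psi (t - real j * h) - Psi (t - real j * h - h) \<le> h * exp h * phi (t - real j * h)"
      using Psi_inc_upper[OF h, of "t - real j * h"] by simp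
    also have "\<dots> \<le> h * exp h * c"
      using h \<open>phi (t - real j * h) \<le> c\<close> by (intro mult_left_mono) auto
    finally show "Psi (t - real j * h) - Psi (t - real j * h - h) \<le> h * exp h * c" .
  qed
  also have "\<dots> = real J * h * exp h * c" by simp
  also have "\<dots> \<le> (x + h) * exp h * c"
    using J2 c by (intro mult_right_mono) auto
  finally show ?thesis .
qed

lemma Psi_upper_global:
  assumes h: "0 < h" and x: "0 < x"
  shows "Psi t - Psi (t - x) \<le> (x + h) * exp h * Cphi"
  by (rule Psi_upper_interval[OF h less_imp_le[OF Cphi_pos] _ x order.refl]) (rule phi_le)

end


context renewal begin

definition Spt :: "real set" where "Spt = {x. \<forall>r>0. emeasure rho (ball x r) \<noteq> 0}"

lemma AE_Spt: "AE x in rho. x \<in> Spt"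
proof -
  define I where "I = {(q::rat, r::rat). 0 < r \<and> emeasure rho (ball (of_rat q) (of_rat r)) = 0}"
  define N where "N = (\<Union>i\<in>I. ball (of_rat (fst i)) (of_rat (snd i)) :: real set)"
  have "countable I"
    by (rule countable_subset[of _ UNIV]) auto
  then have N: "N \<in> null_sets rho"
    unfolding N_def by (rule null_sets_UN') (auto simp: I_def null_sets_def sets_rho)
  show ?thesis
  proof (rule AE_I'[OF N], safe)
    fix x assume "x \<notin> Spt"
    then obtain r where r: "r > 0" "emeasure rho (ball x r) = 0" by (auto simp: Spt_def)
    obtain r' :: rat where r': "r / 4 < of_rat r'" "of_rat r' < r / 2"
      using of_rat_dense[of "r/4" "r/2"] r by auto
    obtain q :: rat where q: "x - r / 4 < of_rat q" "of_rat q < x + r / 4"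
      using of_rat_dense[of "x - r/4" "x + r/4"] r by auto
    have sub: "ball (of_rat q) (of_rat r') \<subseteq> ball x r"
      using q r' by (auto simp: ball_def dist_real_def)
    have "emeasure rho (ball (of_rat q) (of_rat r')) \<le> emeasure rho (ball x r)"
      by (rule emeasure_mono[OF sub]) (simp add: sets_rho)
    then have "emeasure rho (ball (of_rat q) (of_rat r')) = 0" using r by simp
    moreover have "0 < r'" using r' r
      by (metis of_rat_less of_rat_0 order.strict_trans zero_less_divide_iff zero_less_numeral)
    ultimately have "(q, r') \<in> I" by (simp add: I_def)
    moreover have "x \<in> ball (of_rat q) (of_rat r')"
      using q r' by (auto simp: ball_def dist_real_def)
    ultimately show "x \<in> N" unfolding N_def by force
  qed
qed

lemma Spt_nonneg: "x \<in> Spt \<Longrightarrow> 0 \<le> x"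
proof (rule ccontr)
  assume x: "x \<in> Spt" "\<not> 0 \<le> x"
  have N1: "{y \<in> space rho. \<not> y > 0} \<in> null_sets rho"
    using pos by (subst AE_iff_null[symmetric]) (auto simp: sets_rho)
  have N2: "ball x (-x) \<subseteq> {y \<in> space rho. \<not> y > 0}"
    using x by (auto simp: ball_def dist_real_def space_rho)
  have "ball x (-x) \<in> null_sets rho"
    by (rule null_sets_subset[OF N1 _ N2]) (simp add: sets_rho)
  then show False using x by (auto simp: Spt_def null_sets_def)
qed

lemma Spt_nonempty: "\<exists>x. x \<in> Spt"
proof (rule ccontr)
  assume "\<nexists>x. x \<in> Spt"
  with AE_Spt have "AE x in rho. False" by simp
  then show False by (simp add: AE_False emeasure_space_1)
qed

primrec Sig :: "nat \<Rightarrow> real set" where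
  "Sig 0 = {0}"
| "Sig (Suc k) = {p + x |p x. p \<in> Sig k \<and> x \<in> Spt}"

lemma Sig_add: "u \<in> Sig i \<Longrightarrow> v \<in> Sig j \<Longrightarrow> u + v \<in> Sig (i + j)"
proof (induction j arbitrary: v)
  case 0
  then show ?case by simp
next
  case (Suc j)
  then obtain v' x where v: "v = v' + x" "v' \<in> Sig j" "x \<in> Spt" by auto
  have "u + v' \<in> Sig (i + j)" by (rule Suc.IH[OF Suc.prems(1) v(2)])
  moreover have "u + v = (u + v') + x" using v by (simp add: add.assoc)
  ultimately show ?case using v(3) by (simp only: add_Suc_right Sig.simps) blast
qed

lemma Sig_nonneg: "u \<in> Sig k \<Longrightarrow> 0 \<le> u"
proof (induction k arbitrary: u)
  case (Suc k)
  then obtain u' x where "u = u' + x" "u' \<in> Sig k" "x \<in> Spt" by auto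
  then show ?case using Suc.IH Spt_nonneg by (simp add: add_nonneg_nonneg)
qed simp

lemma Spt_Sig1: "x \<in> Spt \<Longrightarrow> x \<in> Sig 1"
  unfolding One_nat_def Sig.simps by (rule CollectI, rule exI[of _ 0], rule exI[of _ x]) simp

lemma Sig_mult: "u \<in> Sig i \<Longrightarrow> real m * u \<in> Sig (m * i)"
proof (induction m)
  case 0
  then show ?case by simp
next
  case (Suc m)
  have "u + real m * u \<in> Sig (i + m * i)" by (rule Sig_add[OF Suc.prems Suc.IH[OF Suc.prems]])
  then show ?case by (simp add: algebra_simps)
qed

definition Dset :: "real set" where
  "Dset = {d. \<exists>i j p q. p \<in> Sig i \<and> q \<in> Sig j \<and> d = p - q}"

lemma D_add: "d1 \<in> Dset \<Longrightarrow> d2 \<in> Dset \<Longrightarrow> d1 + d2 \<in> Dset"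
proof -
  assume "d1 \<in> Dset" "d2 \<in> Dset"
  then obtain i1 j1 p1 v1 i2 j2 p2 v2 where
    "p1 \<in> Sig i1" "v1 \<in> Sig j1" "d1 = p1 - v1" "p2 \<in> Sig i2" "v2 \<in> Sig j2" "d2 = p2 - v2"
    by (auto simp: Dset_def)
  then show ?thesis unfolding Dset_def
    by (intro CollectI exI[of _ "i1 + i2"] exI[of _ "j1 + j2"] exI[of _ "p1 + p2"] exI[of _ "v1 + v2"] conjI Sig_add)
       simp_all
qed

lemma D_neg: "d \<in> Dset \<Longrightarrow> - d \<in> Dset"
proof -
  assume "d \<in> Dset"
  then obtain i j u v where "u \<in> Sig i" "v \<in> Sig j" "d = u - v" by (auto simp: Dset_def)
  then show ?thesis unfolding Dset_def
    by (intro CollectI exI[of _ j] exI[of _ i] exI[of _ v] exI[of _ u]) simp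
qed

lemma D_0: "0 \<in> Dset"
  unfolding Dset_def by (intro CollectI exI[of _ 0] exI[of _ 0] exI[of _ 0] exI[of _ 0]) simp

lemma D_diff: "d1 \<in> Dset \<Longrightarrow> d2 \<in> Dset \<Longrightarrow> d1 - d2 \<in> Dset"
proof -
  assume "d1 \<in> Dset" "d2 \<in> Dset"
  then have "d1 + - d2 \<in> Dset" by (intro D_add D_neg)
  then show ?thesis by simp
qed

lemma D_nat_mult: "d \<in> Dset \<Longrightarrow> real n * d \<in> Dset"
proof (induction n)
  case 0
  then show ?case using D_0 by simp
next
  case (Suc n)
  have "d + real n * d \<in> Dset" by (rule D_add[OF Suc.prems Suc.IH[OF Suc.prems]])
  then show ?case by (simp add: distrib_right)
qed

lemma D_int_mult: "d \<in> Dset \<Longrightarrow> of_int k * d \<in> Dset"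
proof (cases "k \<ge> 0")
  case True
  assume "d \<in> Dset"
  then have "real (nat k) * d \<in> Dset" by (rule D_nat_mult)
  then show ?thesis using True by simp
next
  case False
  assume "d \<in> Dset"
  then have "real (nat (-k)) * d \<in> Dset" by (rule D_nat_mult)
  then have "- (real (nat (-k)) * d) \<in> Dset" by (rule D_neg)
  then show ?thesis using False by simp
qed

lemma Spt_D: "s \<in> Spt \<Longrightarrow> s0 \<in> Spt \<Longrightarrow> s - s0 \<in> Dset"
  unfolding Dset_def by (intro CollectI exI[of _ 1] exI[of _ 1] exI[of _ s] exI[of _ s0]) (auto intro: Spt_Sig1)

end

locale renewal_nl = renewal +
  assumes nonlattice: "\<not> lattice_law rho"
begin

lemma gap: "\<delta> > 0 \<Longrightarrow> \<exists>i j p q. p \<in> Sig i \<and> q \<in> Sig j \<and> 0 < p - q \<and> p - q < \<delta>"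
proof (rule ccontr)
  assume d0: "\<delta> > 0" and nogap: "\<not> (\<exists>i j p q. p \<in> Sig i \<and> q \<in> Sig j \<and> 0 < p - q \<and> p - q < \<delta>)"
  have noD: "\<delta> \<le> d" if dD: "d \<in> Dset" and dpos: "0 < d" for d
  proof -
    obtain i j u v where "u \<in> Sig i" "v \<in> Sig j" "d = u - v" using dD unfolding Dset_def by blast
    then show ?thesis using nogap dpos by (metis not_less)
  qed
  obtain s0 where s0: "s0 \<in> Spt" using Spt_nonempty by blast
  have "lattice_law rho"
  proof (cases "\<forall>s\<in>Spt. s = s0")
    case True
    show ?thesis unfolding lattice_law_def
      by (rule exI[of _ s0], rule exI[of _ 1]) (use AE_Spt True in \<open>auto elim!: eventually_mono intro: exI[of _ 0]\<close>)
  next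
    case False
    then obtain s1 where s1: "s1 \<in> Spt" "s1 \<noteq> s0" by blast
    define Dp where "Dp = Dset \<inter> {0<..}"
    have Dp_ne: "Dp \<noteq> {}"
    proof (cases "s1 > s0")
      case True
      then show ?thesis using Spt_D[OF s1(1) s0] by (auto simp: Dp_def)
    next
      case False
      then have "s0 - s1 > 0" using s1 by simp
      then show ?thesis using Spt_D[OF s0 s1(1)] by (auto simp: Dp_def)
    qed
    have bdd: "bdd_below Dp" unfolding Dp_def bdd_below_def by (rule exI[of _ 0]) auto
    define h where "h = Inf Dp"
    have h_ge: "\<delta> \<le> h"
      unfolding h_def by (rule cInf_greatest[OF Dp_ne]) (auto simp: Dp_def noD)
    have h_lower: "d \<in> Dp \<Longrightarrow> h \<le> d" for d
      unfolding h_def by (rule cInf_lower[OF _ bdd])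
    have h_in: "h \<in> Dset"
    proof (rule ccontr)
      assume hD: "h \<notin> Dset"
      have "Inf Dp < h + \<delta>" using d0 by (simp add: h_def)
      then obtain d1 where d1: "d1 \<in> Dp" "d1 < h + \<delta>" using cInf_lessD[OF Dp_ne] by blast
      have "h < d1" using h_lower[OF d1(1)] hD d1(1) by (auto simp: Dp_def dual_order.order_iff_strict)
      then have "Inf Dp < d1" by (simp add: h_def)
      then obtain d2 where d2: "d2 \<in> Dp" "d2 < d1" using cInf_lessD[OF Dp_ne] by blast
      have "h < d2" using h_lower[OF d2(1)] hD d2(1) by (auto simp: Dp_def dual_order.order_iff_strict)
      have "d1 - d2 \<in> Dset" using d1 d2 by (auto simp: Dp_def intro: D_diff)
      moreover have "0 < d1 - d2" "d1 - d2 < \<delta>" using d1 d2 \<open>h < d2\<close> by auto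
      ultimately show False using noD by fastforce
    qed
    have hpos: "0 < h" using h_ge d0 by simp
    have mult: "\<exists>k::int. d = of_int k * h" if d: "d \<in> Dset" for d
    proof -
      define k where "k = \<lfloor>d / h\<rfloor>"
      have "d - of_int k * h \<in> Dset" by (rule D_diff[OF d D_int_mult[OF h_in]])
      moreover have "0 \<le> d - of_int k * h"
      proof -
        have "of_int k \<le> d / h" by (simp add: k_def)
        then show ?thesis using hpos by (simp add: field_simps)
      qed
      moreover have "d - of_int k * h < h"
      proof -
        have "d / h < of_int k + 1" by (simp add: k_def)
        then show ?thesis using hpos by (simp add: field_simps)
      qed
      ultimately have "d - of_int k * h = 0"
        using h_lower[of "d - of_int k * h"] by (fastforce simp: Dp_def)
      then show ?thesis by auto
    qed
    show ?thesis unfolding lattice_law_def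
    proof (intro exI conjI)
      show "0 < h" by (rule hpos)
      show "AE x in rho. \<exists>z::int. x = s0 + h * of_int z"
        using AE_Spt
      proof eventually_elim
        case (elim x)
        then obtain k :: int where "x - s0 = of_int k * h" using mult[OF Spt_D[OF elim s0]] by blast
        then show ?case by (intro exI[of _ k]) (simp add: algebra_simps)
      qed
    qed
  qed
  with nonlattice show False by simp
qed

end


context renewal_nl begin

lemma density: "\<delta> > 0 \<Longrightarrow> \<exists>a. \<forall>y\<ge>a. \<exists>k. \<exists>u\<in>Sig k. \<bar>u - y\<bar> < \<delta>"
proof -
  assume d0: "\<delta> > 0"
  obtain i j p v where pv: "p \<in> Sig i" "v \<in> Sig j" "0 < p - v" "p - v < \<delta>"
    using gap[OF d0] by blast
  define d where "d = p - v"
  have d: "0 < d" "d < \<delta>" using pv by (auto simp: d_def)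
  have v0: "0 \<le> v" using Sig_nonneg[OF pv(2)] .
  show ?thesis
  proof (cases "v = 0")
    case True
    then have pd: "p = d" by (simp add: d_def)
    show ?thesis
    proof (intro exI[of _ "0::real"] allI impI)
      fix y :: real assume y: "0 \<le> y"
      define m where "m = nat \<lfloor>y / p\<rfloor>"
      have m1: "real m * p \<le> y"
      proof -
        have "real m \<le> y / p" using y d pd by (simp add: m_def)
        then show ?thesis using d pd by (simp add: field_simps)
      qed
      have m2: "y < real m * p + p"
      proof -
        have "y / p < real m + 1" using y d pd by (simp add: m_def)
        then show ?thesis using d pd by (simp add: field_simps)
      qed
      have "real m * p \<in> Sig (m * i)" by (rule Sig_mult[OF pv(1)])
      moreover have "\<bar>real m * p - y\<bar> < \<delta>" using m1 m2 d pd by simp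
      ultimately show "\<exists>k. \<exists>u\<in>Sig k. \<bar>u - y\<bar> < \<delta>" by blast
    qed
  next
    case False
    then have vpos: "0 < v" using v0 by simp
    show ?thesis
    proof (intro exI[of _ "v * (v / d + 1)"] allI impI)
      fix y :: real assume y: "v * (v / d + 1) \<le> y"
      define N where "N = nat \<lfloor>y / v\<rfloor>"
      have y0: "0 \<le> y" using y vpos d by (smt (verit) divide_nonneg_pos mult_nonneg_nonneg)
      have N1: "real N * v \<le> y"
      proof -
        have "real N \<le> y / v" using y0 vpos by (simp add: N_def)
        then show ?thesis using vpos by (simp add: field_simps)
      qed
      have N2: "y < real N * v + v"
      proof -
        have "y / v < real N + 1" using y0 vpos by (simp add: N_def)
        then show ?thesis using vpos by (simp add: field_simps)
      qed
      have N3: "v / d \<le> real N"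
      proof -
        have "v / d + 1 \<le> y / v" using y vpos by (simp add: field_simps)
        moreover have "y / v < real N + 1" using y0 vpos by (simp add: N_def)
        ultimately show ?thesis by simp
      qed
      define m where "m = nat \<lfloor>(y - real N * v) / d\<rfloor>"
      have m1: "real m * d \<le> y - real N * v"
      proof -
        have "real m \<le> (y - real N * v) / d" using N1 d by (simp add: m_def)
        then show ?thesis using d by (simp add: field_simps)
      qed
      have m2: "y - real N * v < real m * d + d"
      proof -
        have "(y - real N * v) / d < real m + 1" using N1 d by (simp add: m_def)
        then show ?thesis using d by (simp add: field_simps)
      qed
      have "real m * d < v" using m1 N2 by simp
      then have "real m < v / d" using d by (simp add: field_simps)
      then have mN: "m \<le> N" using N3 by linarith
      define u where "u = real (N - m) * v + real m * p"
      have "u \<in> Sig ((N - m) * j + m * i)"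
        unfolding u_def by (intro Sig_add Sig_mult pv)
      moreover have "u = real N * v + real m * d"
        using mN by (simp add: u_def d_def of_nat_diff algebra_simps)
      then have "\<bar>u - y\<bar> < \<delta>" using m1 m2 d by simp
      ultimately show "\<exists>k. \<exists>u\<in>Sig k. \<bar>u - y\<bar> < \<delta>" by blast
    qed
  qed
qed

lemma covering:
  assumes d0: "\<delta> > 0" and T0: "T0 \<ge> 0"
  shows "\<exists>a (N::nat) (kk::nat\<Rightarrow>nat) cc. (\<forall>i\<le>N. cc i \<in> Sig (kk i)) \<and>
     (\<forall>y. a \<le> y \<and> y \<le> a + T0 \<longrightarrow> (\<exists>i\<le>N. y + \<delta> / 4 < cc i \<and> cc i + \<delta> / 4 < y + \<delta>))"
proof -
  obtain a0 where a0: "\<And>y. y \<ge> a0 \<Longrightarrow> \<exists>k. \<exists>u\<in>Sig k. \<bar>u - y\<bar> < \<delta> / 8"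
    using density[of "\<delta> / 8"] d0 by auto
  define yy where "yy i = a0 + \<delta> / 2 + real i * \<delta> / 8" for i :: nat
  have ex: "\<exists>u. \<exists>k. u \<in> Sig k \<and> \<bar>u - yy i\<bar> < \<delta> / 8" for i
  proof -
    have "yy i \<ge> a0" using d0 by (simp add: yy_def)
    then show ?thesis using a0 by blast
  qed
  define cc where "cc i = (SOME u. \<exists>k. u \<in> Sig k \<and> \<bar>u - yy i\<bar> < \<delta> / 8)" for i
  have cc: "\<exists>k. cc i \<in> Sig k \<and> \<bar>cc i - yy i\<bar> < \<delta> / 8" for i
    unfolding cc_def by (rule someI_ex[OF ex])
  define kk where "kk i = (SOME k. cc i \<in> Sig k)" for i
  have kk: "cc i \<in> Sig (kk i)" for i
    unfolding kk_def using cc[of i] by (metis someI_ex)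
  have ccy: "\<bar>cc i - yy i\<bar> < \<delta> / 8" for i using cc[of i] by blast
  define N where "N = nat \<lceil>T0 * 8 / \<delta>\<rceil>"
  have A: "\<forall>i\<le>N. cc i \<in> Sig (kk i)" using kk by blast
  have B: "\<forall>y. a0 \<le> y \<and> y \<le> a0 + T0 \<longrightarrow> (\<exists>i\<le>N. y + \<delta> / 4 < cc i \<and> cc i + \<delta> / 4 < y + \<delta>)"
    proof (intro allI impI)
    fix y assume y: "a0 \<le> y \<and> y \<le> a0 + T0"
    define i where "i = nat \<lfloor>(y - a0) * 8 / \<delta>\<rfloor>"
    have i1: "real i * \<delta> / 8 \<le> y - a0"
    proof -
      have "real i \<le> (y - a0) * 8 / \<delta>" using y d0 by (simp add: i_def)
      then show ?thesis using d0 by (simp add: field_simps)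
    qed
    have i2: "y - a0 < real i * \<delta> / 8 + \<delta> / 8"
    proof -
      have "(y - a0) * 8 / \<delta> < real i + 1" using y d0 by (simp add: i_def)
      then show ?thesis using d0 by (simp add: field_simps)
    qed
    have "i \<le> N"
    proof -
      have "(y - a0) * 8 / \<delta> \<le> T0 * 8 / \<delta>" using y d0 by (intro divide_right_mono) auto
      then have "\<lfloor>(y - a0) * 8 / \<delta>\<rfloor> \<le> \<lceil>T0 * 8 / \<delta>\<rceil>"
        by (meson ceiling_correct floor_le_ceiling floor_mono le_floor_iff order_trans)
      then show ?thesis unfolding i_def N_def by (simp add: nat_mono)
    qed
    moreover have c12: "yy i - \<delta> / 8 < cc i" "cc i < yy i + \<delta> / 8"
      using ccy[of i] unfolding abs_less_iff by auto
    moreover have "y + \<delta> / 4 < cc i" "cc i + \<delta> / 4 < y + \<delta>"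
      using c12 i1 i2 d0 unfolding yy_def by auto
    ultimately show "\<exists>i\<le>N. y + \<delta> / 4 < cc i \<and> cc i + \<delta> / 4 < y + \<delta>" by blast
    qed
  show ?thesis using A B by blast
qed

lemma ind_bddm: "bddm (indicator (ball c r) :: real \<Rightarrow> real) 1"
  by (rule bddmI[OF borel_measurable_indicator]) (auto simp: indicator_def)

lemma positivity: "u \<in> Sig k \<Longrightarrow> r > 0 \<Longrightarrow> 0 < Tn k (indicator (ball (t - u) r)) t"
proof (induction k arbitrary: u r t)
  case 0
  then show ?case by simp
next
  case (Suc k)
  then obtain u' x where ux: "u = u' + x" "u' \<in> Sig k" "x \<in> Spt" by auto
  define f :: "real \<Rightarrow> real" where "f = indicator (ball (t - u) r)"
  have int: "integrable rho (\<lambda>y. g y * Tn k f (t - y))"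
    by (rule T_integrable[where B=1]) (use Tn_bddm[OF ind_bddm] in \<open>auto simp: f_def bddm_def\<close>)
  have "(\<integral>y. 0 \<partial>rho) < (\<integral>y. g y * Tn k f (t - y) \<partial>rho)"
  proof (rule integral_less_AE[where A="ball x (r/2)"])
    show "emeasure rho (ball x (r / 2)) \<noteq> 0" using ux(3) Suc.prems by (auto simp: Spt_def)
    show "ball x (r / 2) \<in> sets rho" by (simp add: sets_rho)
    show "AE y in rho. y \<in> ball x (r / 2) \<longrightarrow> 0 \<noteq> g y * Tn k f (t - y)"
    proof (intro AE_I2 impI)
      fix y assume y: "y \<in> ball x (r / 2)"
      have "0 < Tn k (indicator (ball ((t - y) - u') (r / 2))) (t - y)"
        by (rule Suc.IH[OF ux(2)]) (use Suc.prems in simp)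
      also have "\<dots> \<le> Tn k f (t - y)"
      proof (rule Tn_mono[OF ind_bddm ind_bddm[of "t - u" r, folded f_def]])
        fix s
        show "indicator (ball ((t - y) - u') (r / 2)) s \<le> f s"
        proof (cases "s \<in> ball ((t - y) - u') (r / 2)")
          case True
          then have "s \<in> ball (t - u) r"
          proof -
            have e: "t - u - s = (t - y - u' - s) + (y - x)" using ux(1) by simp
            have "\<bar>t - y - u' - s\<bar> < r / 2" "\<bar>x - y\<bar> < r / 2"
              using y True unfolding mem_ball dist_real_def by auto
            then have "\<bar>t - u - s\<bar> < r" unfolding e
              using abs_triangle_ineq[of "t - y - u' - s" "y - x"] by (simp add: abs_minus_commute)
            then show ?thesis by (simp add: dist_real_def)
          qed
          then show ?thesis using True by (simp add: f_def)
        next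
          case False
          then show ?thesis by (simp add: f_def)
        qed
      qed
      finally show "0 \<noteq> g y * Tn k f (t - y)" using g_pos[of y] by simp
    qed
    show "AE y in rho. 0 \<le> g y * Tn k f (t - y)"
      using g_pos Tn_nonneg[OF ind_bddm] by (auto intro!: AE_I2 simp: f_def less_imp_le)
  qed (use int in auto)
  then show ?case by (simp add: Tn_Suc T_def f_def)
qed

lemma Tn_ind_shift: "Tn k (indicator (ball (t - c) r)) t = Tn k (indicator (ball (0 - c) r)) 0"
proof -
  have "(\<lambda>s. (indicator (ball (0 - c) r) :: real \<Rightarrow> real) (s + - t)) = indicator (ball (t - c) r)"
    by (auto simp: fun_eq_iff indicator_def dist_real_def)
  then have "Tn k (indicator (ball (t - c) r)) = (\<lambda>t'. Tn k (indicator (ball (0 - c) r)) (t' + - t))"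
    using Tn_shift[of k "indicator (ball (0 - c) r)" "- t"] by simp
  then show ?thesis by simp
qed

end


context renewal_nl begin

lemma cover_core:
  assumes d0: "\<delta> > 0" and T0: "T0 \<ge> 0"
  shows "\<exists>a \<pi> (K::nat). 0 < \<pi> \<and> (\<forall>t D B \<epsilon>. bddm D B \<longrightarrow> (\<forall>u. 0 \<le> D u) \<longrightarrow> (\<forall>k\<le>K. Tn k D t < \<epsilon> * \<pi>) \<longrightarrow>
      (\<forall>y. 0 \<le> y \<and> y \<le> T0 \<longrightarrow> (\<exists>y'. y + a \<le> y' \<and> y' \<le> y + a + \<delta> \<and> D (t - y') < \<epsilon>)))"
proof -
  obtain a and N :: nat and kk :: "nat \<Rightarrow> nat" and cc where
    cc: "\<And>i. i \<le> N \<Longrightarrow> cc i \<in> Sig (kk i)" and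
    cov: "\<And>y. a \<le> y \<Longrightarrow> y \<le> a + T0 \<Longrightarrow> \<exists>i\<le>N. y + \<delta> / 4 < cc i \<and> cc i + \<delta> / 4 < y + \<delta>"
    using covering[OF d0 T0] by blast
  define r where "r = \<delta> / 4"
  have r: "0 < r" using d0 by (simp add: r_def)
  define \<pi>i where "\<pi>i i = Tn (kk i) (indicator (ball (0 - cc i) r)) 0" for i
  have \<pi>i_pos: "0 < \<pi>i i" if "i \<le> N" for i
    unfolding \<pi>i_def by (rule positivity[OF cc[OF that] r])
  define \<pi> where "\<pi> = Min (\<pi>i ` {..N})"
  have \<pi>_pos: "0 < \<pi>" unfolding \<pi>_def using \<pi>i_pos by (subst Min_gr_iff) auto
  have \<pi>_le: "\<pi> \<le> \<pi>i i" if "i \<le> N" for i unfolding \<pi>_def using that by (intro Min_le) auto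
  define K where "K = Max (kk ` {..N})"
  have K: "kk i \<le> K" if "i \<le> N" for i unfolding K_def using that by (intro Max_ge) auto
  have main: "\<forall>t D B \<epsilon>. bddm D B \<longrightarrow> (\<forall>u. 0 \<le> D u) \<longrightarrow> (\<forall>k\<le>K. Tn k D t < \<epsilon> * \<pi>) \<longrightarrow>
      (\<forall>y. 0 \<le> y \<and> y \<le> T0 \<longrightarrow> (\<exists>y'. y + a \<le> y' \<and> y' \<le> y + a + \<delta> \<and> D (t - y') < \<epsilon>))"
  proof (intro allI impI)
    fix t D B \<epsilon> y
    assume D: "bddm D B" and Dnn: "\<forall>u. 0 \<le> D u" and small: "\<forall>k\<le>K. Tn k D t < \<epsilon> * \<pi>"
      and y: "0 \<le> y \<and> y \<le> T0"
    obtain i where i: "i \<le> N" "y + a + \<delta> / 4 < cc i" "cc i + \<delta> / 4 < y + a + \<delta>"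
      using cov[of "y + a"] y by auto
    show "\<exists>y'. y + a \<le> y' \<and> y' \<le> y + a + \<delta> \<and> D (t - y') < \<epsilon>"
    proof (rule ccontr)
      assume no: "\<not> ?thesis"
      have pw: "\<epsilon> * indicator (ball (t - cc i) r) s \<le> D s" for s
      proof (cases "s \<in> ball (t - cc i) r")
        case True
        then have "\<bar>t - cc i - s\<bar> < r" by (simp add: dist_real_def)
        then have "y + a \<le> t - s" "t - s \<le> y + a + \<delta>" using i unfolding r_def abs_less_iff by auto
        then have "\<epsilon> \<le> D (t - (t - s))" using no by (meson not_less)
        then show ?thesis using True by simp
      next
        case False
        then show ?thesis using Dnn by simp
      qed
      have bi: "bddm (\<lambda>s. \<epsilon> * indicator (ball (t - cc i) r) s) \<bar>\<epsilon>\<bar>"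
        by (rule bddmI) (auto simp: indicator_def)
      have "Tn (kk i) (\<lambda>s. \<epsilon> * indicator (ball (t - cc i) r) s) t \<le> Tn (kk i) D t"
        by (rule Tn_mono[OF bi D pw])
      moreover have "Tn (kk i) (\<lambda>s. \<epsilon> * indicator (ball (t - cc i) r) s) t = \<epsilon> * \<pi>i i"
        by (simp add: Tn_cmult Tn_ind_shift \<pi>i_def)
      moreover have "Tn (kk i) D t < \<epsilon> * \<pi>" using small K[OF i(1)] by blast
      moreover have "0 \<le> Tn (kk i) D t" by (rule Tn_nonneg[OF D]) (use Dnn in auto)
      moreover have "\<epsilon> * \<pi> \<le> \<epsilon> * \<pi>i i" if "0 \<le> \<epsilon>"
        using that \<pi>_le[OF i(1)] by (simp add: mult_left_mono)
      moreover have "\<epsilon> * \<pi> < 0" if "\<epsilon> < 0"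
        using that \<pi>_pos by (simp add: mult_neg_pos)
      ultimately show False by (cases "0 \<le> \<epsilon>") auto
    qed
  qed
  show ?thesis using \<pi>_pos main by blast
qed

end


context renewal_nl begin

lemma sum_Tn_z_le: "0 \<le> t \<Longrightarrow> (\<Sum>i<k. Tn i z t) \<le> real k * b ^ k * exp (-t)"
proof -
  assume t: "0 \<le> t"
  have "(\<Sum>i<k. Tn i z t) \<le> of_nat (card {..<k}) * (b ^ k * exp (-t))"
  proof (rule sum_bounded_above)
    fix i assume "i \<in> {..<k}"
    then have "b ^ i \<le> b ^ k" using b_ge by (intro power_increasing) auto
    moreover have "Tn i z t \<le> b ^ i * exp (-t)" using Tn_z_le[of i t] t by (simp add: E_def)
    ultimately show "Tn i z t \<le> b ^ k * exp (-t)"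
      by (meson exp_ge_zero mult_right_mono order_trans)
  qed
  then show ?thesis by simp
qed

lemma Tn_phi_le: "Tn k phi t \<le> phi t"
proof -
  have "0 \<le> (\<Sum>i<k. Tn i z t)" by (intro sum_nonneg Tn_nonneg[OF z_bddm z_nonneg])
  then show ?thesis using phi_iter[of t k] by simp
qed

lemma Tn_tail_bound:
  assumes P: "bddm P B0" and B0: "0 \<le> B0" and eta: "0 \<le> \<eta>" and Ps: "\<And>u. s0 \<le> u \<Longrightarrow> P u \<le> \<eta>"
  shows "Tn k P t \<le> \<eta> + B0 * (1 - R k (t - s0))"
proof -
  define F where "F u = (\<eta> + B0) - B0 * H (u - s0)" for u
  have bF2: "bddm (\<lambda>u. B0 * H (u - s0)) B0"
    using B0 by (intro bddmI) (auto simp: H_def)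
  have "P u \<le> F u" for u
  proof (cases "s0 \<le> u")
    case True
    then show ?thesis using Ps[OF True] by (simp add: F_def H_def)
  next
    case False
    then show ?thesis using bddmD(2)[OF P, of u] eta by (simp add: F_def H_def)
  qed
  moreover have bF: "bddm F (\<bar>\<eta> + B0\<bar> + B0)"
    unfolding F_def using bddm_const[of "\<eta> + B0"] bF2 unfolding bddm_def
    by (auto intro: order.trans[OF abs_triangle_ineq4] add_mono)
  ultimately have "Tn k P t \<le> Tn k F t" by (intro Tn_mono[OF P bF])
  also have "Tn k F t = (\<eta> + B0) - B0 * R k (t - s0)"
  proof -
    have "Tn k F = Tn k (\<lambda>u. (\<eta> + B0) - B0 * H (u - s0))" by (simp add: F_def[abs_def])
    also have "\<dots> = (\<lambda>t. Tn k (\<lambda>_. \<eta> + B0) t - Tn k (\<lambda>u. B0 * H (u - s0)) t)"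
      by (rule Tn_diff[OF bddm_const bF2])
    finally show ?thesis by (simp add: Tn_const Tn_cmult Tn_Hshift)
  qed
  finally show ?thesis by (simp add: algebra_simps)
qed

lemma choose_t:
  fixes e A1 A2 s0 :: real
  assumes e: "0 < e" and A1: "0 \<le> A1" and A2: "0 \<le> A2"
  shows "\<exists>t0. \<forall>t\<ge>t0. A1 * exp (-t) \<le> e \<and> s0 < t \<and> A2 / (t - s0) \<le> e"
proof -
  define t1 where "t1 = ln ((A1 + 1) / e)"
  define t2 where "t2 = s0 + A2 / e + 1"
  show ?thesis
  proof (intro exI[of _ "max t1 t2"] allI impI conjI)
    fix t assume t: "max t1 t2 \<le> t"
    have "exp (-t) \<le> exp (-t1)" using t by simp
    also have "exp (-t1) = e / (A1 + 1)" using e A1 by (simp add: t1_def exp_minus exp_ln_iff)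
    finally have "A1 * exp (-t) \<le> A1 * (e / (A1 + 1))" using A1 by (intro mult_left_mono) auto
    also have "\<dots> \<le> e" using e A1 by (simp add: field_simps)
    finally show "A1 * exp (-t) \<le> e" .
    have "s0 + A2 / e + 1 \<le> t" using t by (simp add: t2_def)
    moreover have "0 \<le> A2 / e" using A2 e by simp
    ultimately show st: "s0 < t" by linarith
    have "A2 / e < t - s0" using \<open>s0 + A2 / e + 1 \<le> t\<close> by simp
    then have "A2 \<le> e * (t - s0)" using e by (simp add: field_simps)
    then show "A2 / (t - s0) \<le> e" using st
      by (simp add: divide_le_eq mult.commute)
  qed
qed

end


context renewal_nl begin

lemma kb_mono: "k \<le> K \<Longrightarrow> real k * c ^ k \<le> real K * c ^ K" if "1 \<le> (c::real)"
  using that by (intro mult_mono power_increasing) auto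

lemma near_L:
  assumes L1: "\<forall>\<eta>>0. \<exists>s0. \<forall>t\<ge>s0. phi t \<le> L + \<eta>"
    and L2: "\<forall>\<eta>>0. \<forall>s. \<exists>t\<ge>s. L - \<eta> \<le> phi t"
    and e: "0 < \<epsilon>" and d: "0 < \<delta>" and T0: "0 \<le> T0"
  shows "\<exists>\<tau>\<ge>s1. \<forall>y. 0 \<le> y \<and> y \<le> T0 \<longrightarrow> exp (-\<delta>) * (L - \<epsilon>) \<le> phi (\<tau> - y)"
proof -
  obtain a \<pi> and K :: nat where \<pi>: "0 < \<pi>" and
    core: "\<forall>t D B \<epsilon>. bddm D B \<longrightarrow> (\<forall>u. 0 \<le> D u) \<longrightarrow> (\<forall>k\<le>K. Tn k D t < \<epsilon> * \<pi>) \<longrightarrow>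
      (\<forall>y. 0 \<le> y \<and> y \<le> T0 \<longrightarrow> (\<exists>y'. y + a \<le> y' \<and> y' \<le> y + a + \<delta> \<and> D (t - y') < \<epsilon>))"
    using cover_core[OF d T0] by blast
  define e where "e = \<epsilon> * \<pi> / 8"
  have e0: "0 < e" using e \<pi> by (simp add: e_def)
  obtain s0 where s0: "\<And>t. t \<ge> s0 \<Longrightarrow> phi t \<le> L + 2 * e" using L1 e0 by (meson mult_pos_pos zero_less_numeral)
  define C' where "C' = Cphi + \<bar>L\<bar>"
  have C': "0 \<le> C'" using Cphi_pos by (simp add: C'_def)
  obtain t0 where t0: "\<And>t. t \<ge> t0 \<Longrightarrow> real K * b ^ K * exp (-t) \<le> 2 * e \<and> s0 < t \<and> C' * (real K * 2 ^ K * mu) / (t - s0) \<le> 2 * e"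
    using choose_t[of "2 * e" "real K * b ^ K" "C' * (real K * 2 ^ K * mu)" s0] e0 b_ge C' mu_pos by auto
  obtain t where t: "t \<ge> max t0 (max (s1 + a) 0)" "L - e \<le> phi t" using L2 e0 by blast
  have tt: "real K * b ^ K * exp (-t) \<le> 2 * e" "s0 < t" "C' * (real K * 2 ^ K * mu) / (t - s0) \<le> 2 * e"
    using t0 t(1) by auto
  define D where "D u = max 0 (L - phi u)" for u
  define P where "P u = max 0 (phi u - L)" for u
  have Dnn: "\<forall>u. 0 \<le> D u" by (simp add: D_def)
  have bD: "bddm D \<bar>L\<bar>"
  proof (rule bddmI)
    show "D \<in> borel_measurable borel" unfolding D_def[abs_def] by measurable
    show "\<bar>D u\<bar> \<le> \<bar>L\<bar>" for u using phi_nonneg[of u] by (auto simp: D_def abs_le_iff max_def)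
  qed
  have bP: "bddm P C'"
  proof (rule bddmI)
    show "P \<in> borel_measurable borel" unfolding P_def[abs_def] by measurable
    show "\<bar>P u\<bar> \<le> C'" for u using phi_nonneg[of u] phi_le[of u] by (auto simp: P_def C'_def abs_le_iff max_def)
  qed
  have bLphi: "bddm (\<lambda>u. L - phi u) (\<bar>L\<bar> + Cphi)"
  proof (rule bddmI)
    show "\<bar>L - phi u\<bar> \<le> \<bar>L\<bar> + Cphi" for u using phi_nonneg[of u] phi_le[of u] by (auto simp: abs_le_iff)
  qed measurable
  have small: "\<forall>k\<le>K. Tn k D t < \<epsilon> * \<pi>"
  proof (intro allI impI)
    fix k assume k: "k \<le> K"
    have "D = (\<lambda>u. (L - phi u) + P u)" by (auto simp: D_def P_def fun_eq_iff max_def)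
    then have "Tn k D t = Tn k (\<lambda>u. L - phi u) t + Tn k P t"
      using Tn_add[OF bLphi bP, of k] by simp
    also have "Tn k (\<lambda>u. L - phi u) t = L - Tn k phi t"
      using Tn_diff[OF bddm_const phi_bddm, of k L] by (simp add: Tn_const)
    also have "Tn k phi t = phi t - (\<Sum>i<k. Tn i z t)" using phi_iter[of t k] by simp
    finally have eq: "Tn k D t = (L - phi t) + (\<Sum>i<k. Tn i z t) + Tn k P t" by simp
    have "(\<Sum>i<k. Tn i z t) \<le> real k * b ^ k * exp (-t)" using t by (intro sum_Tn_z_le) auto
    also have "\<dots> \<le> real K * b ^ K * exp (-t)" using kb_mono[OF b_ge k] by (simp add: mult_right_mono)
    finally have s1: "(\<Sum>i<k. Tn i z t) \<le> 2 * e" using tt by simp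
    have "Tn k P t \<le> 2 * e + C' * (1 - R k (t - s0))"
      by (rule Tn_tail_bound[OF bP C']) (use e0 in \<open>auto simp: P_def dest!: s0\<close>)
    also have "C' * (1 - R k (t - s0)) \<le> C' * (real k * 2 ^ k * mu / (t - s0))"
      using tight[of "t - s0" k] tt C' by (intro mult_left_mono) auto
    also have "\<dots> \<le> C' * (real K * 2 ^ K * mu) / (t - s0)"
    proof -
      have "real k * 2 ^ k \<le> real K * (2::real) ^ K" by (rule kb_mono) (use k in auto)
      then have "real k * 2 ^ k * mu \<le> real K * 2 ^ K * mu" using mu_pos by (intro mult_right_mono) auto
      then show ?thesis using C' tt by (simp add: divide_right_mono mult_left_mono)
    qed
    finally have s2: "Tn k P t \<le> 4 * e" using tt by simp
    have "Tn k D t \<le> e + 2 * e + 4 * e" using eq s1 s2 t by simp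
    also have "\<dots> < \<epsilon> * \<pi>" using e0 by (simp add: e_def)
    finally show "Tn k D t < \<epsilon> * \<pi>" .
  qed
  have res: "\<forall>y. 0 \<le> y \<and> y \<le> T0 \<longrightarrow> (\<exists>y'. y + a \<le> y' \<and> y' \<le> y + a + \<delta> \<and> D (t - y') < \<epsilon>)"
    using core bD Dnn small by blast
  show ?thesis
  proof (intro exI[of _ "t - a"] conjI allI impI)
    show "s1 \<le> t - a" using t by simp
    fix y assume y: "0 \<le> y \<and> y \<le> T0"
    then obtain y' where y': "y + a \<le> y'" "y' \<le> y + a + \<delta>" "D (t - y') < \<epsilon>" using res by blast
    have "L - \<epsilon> < phi (t - y')" using y'(3) by (simp add: D_def)
    have "phi (t - y') \<le> exp ((t - a - y) - (t - y')) * phi (t - a - y)"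
      by (rule phi_expmono') (use y' in simp)
    also have "\<dots> \<le> exp \<delta> * phi (t - a - y)"
      using y' phi_nonneg by (intro mult_right_mono) auto
    finally have "exp (-\<delta>) * phi (t - y') \<le> phi (t - a - y)"
      by (simp add: exp_minus field_simps)
    moreover have "exp (-\<delta>) * (L - \<epsilon>) \<le> exp (-\<delta>) * phi (t - y')"
      using \<open>L - \<epsilon> < phi (t - y')\<close> by simp
    ultimately show "exp (-\<delta>) * (L - \<epsilon>) \<le> phi (t - a - y)" by linarith
  qed
qed

lemma near_l:
  assumes l1: "\<forall>\<eta>>0. \<exists>s0. \<forall>t\<ge>s0. l - \<eta> \<le> phi t"
    and l2: "\<forall>\<eta>>0. \<forall>s. \<exists>t\<ge>s. phi t \<le> l + \<eta>"
    and e: "0 < \<epsilon>" and d: "0 < \<delta>" and T0: "0 \<le> T0"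
  shows "\<exists>\<tau>\<ge>s1. \<forall>y. 0 \<le> y \<and> y \<le> T0 \<longrightarrow> phi (\<tau> - y) \<le> exp \<delta> * (l + \<epsilon>)"
proof -
  obtain a \<pi> and K :: nat where \<pi>: "0 < \<pi>" and
    core: "\<forall>t D B \<epsilon>. bddm D B \<longrightarrow> (\<forall>u. 0 \<le> D u) \<longrightarrow> (\<forall>k\<le>K. Tn k D t < \<epsilon> * \<pi>) \<longrightarrow>
      (\<forall>y. 0 \<le> y \<and> y \<le> T0 \<longrightarrow> (\<exists>y'. y + a \<le> y' \<and> y' \<le> y + a + \<delta> \<and> D (t - y') < \<epsilon>))"
    using cover_core[OF d T0] by blast
  define e where "e = \<epsilon> * \<pi> / 8"
  have e0: "0 < e" using e \<pi> by (simp add: e_def)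
  obtain s0 where s0: "\<And>t. t \<ge> s0 \<Longrightarrow> l - 2 * e \<le> phi t" using l1 e0 by (meson mult_pos_pos zero_less_numeral)
  define C' where "C' = \<bar>l\<bar>"
  have C': "0 \<le> C'" by (simp add: C'_def)
  obtain t0 where t0: "\<And>t. t \<ge> t0 \<Longrightarrow> real K * b ^ K * exp (-t) \<le> 2 * e \<and> s0 < t \<and> C' * (real K * 2 ^ K * mu) / (t - s0) \<le> 2 * e"
    using choose_t[of "2 * e" "real K * b ^ K" "C' * (real K * 2 ^ K * mu)" s0] e0 b_ge C' mu_pos by auto
  obtain t where t: "t \<ge> max t0 (max (s1 + a + \<delta>) 0)" "phi t \<le> l + e" using l2 e0 by blast
  have tt: "s0 < t" "C' * (real K * 2 ^ K * mu) / (t - s0) \<le> 2 * e"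
    using t0 t(1) by auto
  define D where "D u = max 0 (phi u - l)" for u
  define P where "P u = max 0 (l - phi u)" for u
  have Dnn: "\<forall>u. 0 \<le> D u" by (simp add: D_def)
  have bD: "bddm D (Cphi + \<bar>l\<bar>)"
  proof (rule bddmI)
    show "D \<in> borel_measurable borel" unfolding D_def[abs_def] by measurable
    show "\<bar>D u\<bar> \<le> Cphi + \<bar>l\<bar>" for u using phi_nonneg[of u] phi_le[of u] by (auto simp: D_def abs_le_iff max_def)
  qed
  have bP: "bddm P C'"
  proof (rule bddmI)
    show "P \<in> borel_measurable borel" unfolding P_def[abs_def] by measurable
    show "\<bar>P u\<bar> \<le> C'" for u using phi_nonneg[of u] by (auto simp: P_def C'_def abs_le_iff max_def)
  qed
  have bphil: "bddm (\<lambda>u. phi u - l) (Cphi + \<bar>l\<bar>)"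
  proof (rule bddmI)
    show "\<bar>phi u - l\<bar> \<le> Cphi + \<bar>l\<bar>" for u using phi_nonneg[of u] phi_le[of u] by (auto simp: abs_le_iff)
  qed measurable
  have small: "\<forall>k\<le>K. Tn k D t < \<epsilon> * \<pi>"
  proof (intro allI impI)
    fix k assume k: "k \<le> K"
    have "D = (\<lambda>u. (phi u - l) + P u)" by (auto simp: D_def P_def fun_eq_iff max_def)
    then have "Tn k D t = Tn k (\<lambda>u. phi u - l) t + Tn k P t"
      using Tn_add[OF bphil bP, of k] by simp
    also have "Tn k (\<lambda>u. phi u - l) t = Tn k phi t - l"
      using Tn_diff[OF phi_bddm bddm_const, of k l] by (simp add: Tn_const)
    finally have eq: "Tn k D t = Tn k phi t - l + Tn k P t" by simp
    have "Tn k P t \<le> 2 * e + C' * (1 - R k (t - s0))"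
      by (rule Tn_tail_bound[OF bP C']) (use e0 in \<open>auto simp: P_def dest!: s0\<close>)
    also have "C' * (1 - R k (t - s0)) \<le> C' * (real k * 2 ^ k * mu / (t - s0))"
      using tight[of "t - s0" k] tt C' by (intro mult_left_mono) auto
    also have "\<dots> \<le> C' * (real K * 2 ^ K * mu) / (t - s0)"
    proof -
      have "real k * 2 ^ k \<le> real K * (2::real) ^ K" by (rule kb_mono) (use k in auto)
      then have "real k * 2 ^ k * mu \<le> real K * 2 ^ K * mu" using mu_pos by (intro mult_right_mono) auto
      then show ?thesis using C' tt by (simp add: divide_right_mono mult_left_mono)
    qed
    finally have s2: "Tn k P t \<le> 4 * e" using tt by simp
    have "Tn k D t \<le> e + 4 * e" using eq s2 t Tn_phi_le[of k t] by simp
    also have "\<dots> < \<epsilon> * \<pi>" using e0 by (simp add: e_def)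
    finally show "Tn k D t < \<epsilon> * \<pi>" .
  qed
  have res: "\<forall>y. 0 \<le> y \<and> y \<le> T0 \<longrightarrow> (\<exists>y'. y + a \<le> y' \<and> y' \<le> y + a + \<delta> \<and> D (t - y') < \<epsilon>)"
    using core bD Dnn small by blast
  show ?thesis
  proof (intro exI[of _ "t - a - \<delta>"] conjI allI impI)
    show "s1 \<le> t - a - \<delta>" using t by simp
    fix y assume y: "0 \<le> y \<and> y \<le> T0"
    then obtain y' where y': "y + a \<le> y'" "y' \<le> y + a + \<delta>" "D (t - y') < \<epsilon>" using res by blast
    have "phi (t - y') < l + \<epsilon>" using y'(3) e by (simp add: D_def)
    have "phi (t - a - \<delta> - y) \<le> exp ((t - y') - (t - a - \<delta> - y)) * phi (t - y')"
      by (rule phi_expmono') (use y' in simp)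
    also have "\<dots> \<le> exp \<delta> * phi (t - y')"
      using y' phi_nonneg by (intro mult_right_mono) auto
    also have "\<dots> \<le> exp \<delta> * (l + \<epsilon>)"
      using \<open>phi (t - y') < l + \<epsilon>\<close> by simp
    finally show "phi (t - a - \<delta> - y) \<le> exp \<delta> * (l + \<epsilon>)" .
  qed
qed

end


context renewal_nl begin

definition Ssup :: "real \<Rightarrow> real" where "Ssup s = Sup (phi ` {s..})"
definition Sinf :: "real \<Rightarrow> real" where "Sinf s = Inf (phi ` {s..})"
definition LL :: real where "LL = Inf (range Ssup)"
definition ll :: real where "ll = Sup (range Sinf)"

lemma bdd_phi: "bdd_above (phi ` A)" "bdd_below (phi ` A)"
  using phi_le phi_nonneg by (auto intro!: bdd_aboveI bdd_belowI)

lemma phi_le_Ssup: "s \<le> t \<Longrightarrow> phi t \<le> Ssup s"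
  unfolding Ssup_def by (rule cSup_upper[OF _ bdd_phi(1)]) auto

lemma Sinf_le_phi: "s \<le> t \<Longrightarrow> Sinf s \<le> phi t"
  unfolding Sinf_def by (rule cInf_lower[OF _ bdd_phi(2)]) auto

lemma Ssup_nonneg: "0 \<le> Ssup s"
  using phi_le_Ssup[of s s] phi_nonneg[of s] by simp

lemma Sinf_le: "Sinf s \<le> Cphi"
  using Sinf_le_phi[of s s] phi_le[of s] by simp

lemma Sinf_nonneg: "0 \<le> Sinf s"
  unfolding Sinf_def by (rule cInf_greatest) (auto intro: phi_nonneg)

lemma LL_le_Ssup: "LL \<le> Ssup s"
  unfolding LL_def by (rule cInf_lower) (auto intro!: bdd_belowI[of _ 0] Ssup_nonneg)

lemma Sinf_le_ll: "Sinf s \<le> ll"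
  unfolding ll_def by (rule cSup_upper) (auto intro!: bdd_aboveI[of _ Cphi] Sinf_le)

lemma LL_nonneg: "0 \<le> LL"
  unfolding LL_def by (rule cInf_greatest) (auto intro: Ssup_nonneg)

lemma ll_nonneg: "0 \<le> ll"
  using Sinf_le_ll[of 0] Sinf_nonneg[of 0] by simp

lemma L1: "\<forall>\<eta>>0. \<exists>s0. \<forall>t\<ge>s0. phi t \<le> LL + \<eta>"
proof (intro allI impI)
  fix \<eta> :: real assume "0 < \<eta>"
  then have "Inf (range Ssup) < LL + \<eta>" by (simp add: LL_def)
  then obtain s where "Ssup s < LL + \<eta>" using cInf_lessD[of "range Ssup" "LL + \<eta>"] by auto
  then show "\<exists>s0. \<forall>t\<ge>s0. phi t \<le> LL + \<eta>"
    using phi_le_Ssup by (meson less_imp_le order_trans)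
qed

lemma L2: "\<forall>\<eta>>0. \<forall>s. \<exists>t\<ge>s. LL - \<eta> \<le> phi t"
proof (intro allI impI)
  fix \<eta> :: real and s assume "0 < \<eta>"
  then have "LL - \<eta> < Sup (phi ` {s..})" using LL_le_Ssup[of s] by (simp add: Ssup_def)
  then obtain t where "t \<ge> s" "LL - \<eta> < phi t" using less_cSupD[of "phi ` {s..}" "LL - \<eta>"] by auto
  then show "\<exists>t\<ge>s. LL - \<eta> \<le> phi t" by (auto intro: less_imp_le)
qed

lemma l1: "\<forall>\<eta>>0. \<exists>s0. \<forall>t\<ge>s0. ll - \<eta> \<le> phi t"
proof (intro allI impI)
  fix \<eta> :: real assume "0 < \<eta>"
  then have "ll - \<eta> < Sup (range Sinf)" by (simp add: ll_def)
  then obtain s where "ll - \<eta> < Sinf s" using less_cSupD[of "range Sinf" "ll - \<eta>"] by auto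
  then show "\<exists>s0. \<forall>t\<ge>s0. ll - \<eta> \<le> phi t"
    using Sinf_le_phi by (meson less_imp_le order_trans)
qed

lemma l2: "\<forall>\<eta>>0. \<forall>s. \<exists>t\<ge>s. phi t \<le> ll + \<eta>"
proof (intro allI impI)
  fix \<eta> :: real and s assume "0 < \<eta>"
  then have "Inf (phi ` {s..}) < ll + \<eta>" using Sinf_le_ll[of s] by (simp add: Sinf_def)
  then obtain t where "t \<ge> s" "phi t < ll + \<eta>" using cInf_lessD[of "phi ` {s..}" "ll + \<eta>"] by auto
  then show "\<exists>t\<ge>s. phi t \<le> ll + \<eta>" by (auto intro: less_imp_le)
qed

end


context renewal_nl begin

definition mT :: "real \<Rightarrow> real" where "mT Tm = (\<integral>x. indicator {..Tm} x * (g x * x) \<partial>rho)"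
definition GT :: "real \<Rightarrow> real" where "GT Tm = (\<integral>x. indicator {..Tm} x * g x \<partial>rho)"

lemma int_ind_gx: "integrable rho (\<lambda>x. indicator {..Tm} x * (g x * x))"
  using integrable_mult_indicator[OF _ integrable_gx, of "{..Tm}"] by (simp add: sets_rho)

lemma int_ind_g: "integrable rho (\<lambda>x. indicator {..Tm} x * g x)"
  using integrable_mult_indicator[OF _ integrable_g, of "{..Tm}"] by (simp add: sets_rho)

lemma GT_le1: "GT Tm \<le> 1"
proof -
  have "GT Tm \<le> (\<integral>x. g x \<partial>rho)"
    unfolding GT_def
    by (rule integral_mono[OF int_ind_g integrable_g]) (use g_pos in \<open>auto simp: indicator_def less_imp_le\<close>)
  then show ?thesis using integral_g by simp
qed

lemma mT_tendsto: "(\<lambda>n. mT (real (Suc n))) \<longlonglongrightarrow> mu"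
proof -
  have "((\<lambda>y. \<integral>x. indicator {..y} x *\<^sub>R (g x * x) \<partial>rho) \<longlongrightarrow> (\<integral>x. g x * x \<partial>rho)) at_top"
    by (rule tendsto_integral_at_top[OF sets_rho integrable_gx])
  then have "(mT \<longlongrightarrow> mu) at_top" by (simp add: mT_def[abs_def] mu_def)
  then have "(\<lambda>n. mT (real n)) \<longlonglongrightarrow> mu"
    by (rule filterlim_compose[OF _ filterlim_real_sequentially])
  then show ?thesis by (rule LIMSEQ_Suc)
qed

lemma w_pos_val: "0 \<le> t \<Longrightarrow> w t = 1 - exp (-t)" by (simp add: w_def)

lemma LL_mu: "LL * mu \<le> 1"
proof -
  define hh where "hh n = inverse (real (Suc n))" for n
  define F where "F n = exp (- hh n) * max 0 (exp (- hh n) * (LL - hh n)) * (mT (real (Suc n)) - hh n)" for n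
  have hpos: "0 < hh n" for n by (simp add: hh_def)
  have Fle: "F n \<le> 1" for n
  proof -
    define h where "h = hh n"
    define Tm where "Tm = real (Suc n)"
    define c where "c = max 0 (exp (- h) * (LL - h))"
    have h: "0 < h" by (simp add: h_def hpos)
    have Tm: "0 \<le> Tm" by (simp add: Tm_def)
    obtain \<tau> where \<tau>: "\<And>y. 0 \<le> y \<Longrightarrow> y \<le> Tm \<Longrightarrow> exp (- h) * (LL - h) \<le> phi (\<tau> - y)"
      using near_L[OF L1 L2 h h Tm, of 0] by blast
    have c0: "0 \<le> c" by (simp add: c_def)
    have cphi: "c \<le> phi (\<tau> - y)" if "0 \<le> y" "y \<le> Tm" for y
      using \<tau>[OF that] phi_nonneg[of "\<tau> - y"] by (simp add: c_def)
    have "(\<integral>x. indicator {..Tm} x * (g x * ((x - h) * exp (-h) * c)) \<partial>rho) \<le> (\<integral>x. g x * (Psi \<tau> - Psi (\<tau> - x)) \<partial>rho)"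
    proof (rule integral_mono_AE)
      show "integrable rho (\<lambda>x. indicator {..Tm} x * (g x * ((x - h) * exp (-h) * c)))"
      proof -
        have "(\<lambda>x. indicator {..Tm} x * (g x * ((x - h) * exp (-h) * c))) =
            (\<lambda>x. (exp (-h) * c) * (indicator {..Tm} x * (g x * x)) - (exp (-h) * c * h) * (indicator {..Tm} x * g x))"
          by (auto simp: fun_eq_iff algebra_simps)
        then show ?thesis using int_ind_gx int_ind_g by simp
      qed
      show "integrable rho (\<lambda>x. g x * (Psi \<tau> - Psi (\<tau> - x)))"
      proof -
        have "integrable rho (\<lambda>x. Psi \<tau> * g x - g x * Psi (\<tau> - x))"
        proof (intro Bochner_Integration.integrable_diff integrable_mult_right integrable_g)
          show "integrable rho (\<lambda>x. g x * Psi (\<tau> - x))"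
          proof (rule T_integrable[where B="exp \<tau> / (1 - q)"])
            show "\<bar>Psi s\<bar> \<le> exp \<tau> / (1 - q)" if "s \<le> \<tau>" for s
            proof -
              have "Psi s \<le> exp s / (1 - q)" by (rule Psi_le)
              also have "\<dots> \<le> exp \<tau> / (1 - q)" using that q_lt1 by (intro divide_right_mono) auto
              finally show ?thesis using Psi_nonneg[of s] by simp
            qed
          qed simp
        qed
        then show ?thesis by (simp add: algebra_simps)
      qed
      show "AE x in rho. indicator {..Tm} x * (g x * ((x - h) * exp (-h) * c)) \<le> g x * (Psi \<tau> - Psi (\<tau> - x))"
        using pos
      proof eventually_elim
        case (elim x)
        show ?case
        proof (cases "x \<le> Tm")
          case True
          have "(x - h) * exp (-h) * c \<le> Psi \<tau> - Psi (\<tau> - x)"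
            by (rule Psi_lower_interval[OF h c0 cphi elim True])
          then show ?thesis using True g_pos[of x] by (simp add: mult_left_mono)
        next
          case False
          have "Psi (\<tau> - x) \<le> Psi \<tau>" using elim by (intro monoD[OF Psi_mono]) simp
          then show ?thesis using False g_pos[of x] by simp
        qed
      qed
    qed
    also have "\<dots> = w \<tau>" by (rule Psi_identity)
    also have "\<dots> \<le> 1" by (simp add: w_def)
    finally have I: "(\<integral>x. indicator {..Tm} x * (g x * ((x - h) * exp (-h) * c)) \<partial>rho) \<le> 1" .
    have "(\<integral>x. indicator {..Tm} x * (g x * ((x - h) * exp (-h) * c)) \<partial>rho) =
        (\<integral>x. (exp (-h) * c) * (indicator {..Tm} x * (g x * x)) - (exp (-h) * c * h) * (indicator {..Tm} x * g x) \<partial>rho)"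
      by (intro Bochner_Integration.integral_cong refl) (simp add: algebra_simps)
    also have "\<dots> = (exp (-h) * c) * mT Tm - (exp (-h) * c * h) * GT Tm"
      unfolding mT_def GT_def
      by (subst Bochner_Integration.integral_diff) (auto intro: int_ind_gx int_ind_g)
    also have "\<dots> = exp (-h) * c * (mT Tm - h * GT Tm)" by (simp add: algebra_simps)
    finally have "exp (-h) * c * (mT Tm - h * GT Tm) \<le> 1" using I by simp
    moreover have "exp (-h) * c * (mT Tm - h) \<le> exp (-h) * c * (mT Tm - h * GT Tm)"
      using GT_le1[of Tm] h c0 by (intro mult_left_mono) (auto simp: mult_left_le)
    ultimately have "exp (-h) * c * (mT Tm - h) \<le> 1" by linarith
    then show ?thesis by (simp add: F_def h_def Tm_def c_def)
  qed
  have hh0: "hh \<longlonglongrightarrow> 0" unfolding hh_def by (rule LIMSEQ_inverse_real_of_nat)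
  have "F \<longlonglongrightarrow> exp (- 0) * max 0 (exp (- 0) * (LL - 0)) * (mu - 0)"
    unfolding F_def[abs_def] by (intro tendsto_intros hh0 mT_tendsto)
  then have "F \<longlonglongrightarrow> LL * mu" using LL_nonneg by simp
  then show ?thesis by (rule LIMSEQ_le_const2) (use Fle in auto)
qed

lemma integrable_gPsi: "integrable rho (\<lambda>x. g x * (Psi \<tau> - Psi (\<tau> - x)))"
proof -
  have "integrable rho (\<lambda>x. Psi \<tau> * g x - g x * Psi (\<tau> - x))"
  proof (intro Bochner_Integration.integrable_diff integrable_mult_right integrable_g)
    show "integrable rho (\<lambda>x. g x * Psi (\<tau> - x))"
    proof (rule T_integrable[where B="exp \<tau> / (1 - q)"])
      show "\<bar>Psi s\<bar> \<le> exp \<tau> / (1 - q)" if "s \<le> \<tau>" for s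
      proof -
        have "Psi s \<le> exp s / (1 - q)" by (rule Psi_le)
        also have "\<dots> \<le> exp \<tau> / (1 - q)" using that q_lt1 by (intro divide_right_mono) auto
        finally show ?thesis using Psi_nonneg[of s] by simp
      qed
    qed simp
  qed
  then show ?thesis by (simp add: algebra_simps)
qed

lemma ll_mu: "1 \<le> ll * mu"
proof -
  define hh where "hh n = inverse (real (Suc n))" for n
  define G where "G n = exp (hh n) * (exp (hh n) * (ll + hh n) * (mu + hh n) + Cphi * (mu - mT (real (Suc n)) + hh n))" for n
  have hpos: "0 < hh n" for n by (simp add: hh_def)
  have Gge: "1 - hh n \<le> G n" for n
  proof -
    define h where "h = hh n"
    define Tm where "Tm = real (Suc n)"
    define c where "c = exp h * (ll + h)"
    have h: "0 < h" by (simp add: h_def hpos)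
    have Tm: "0 \<le> Tm" by (simp add: Tm_def)
    obtain \<tau> where \<tau>1: "\<tau> \<ge> Tm" and \<tau>: "\<And>y. 0 \<le> y \<Longrightarrow> y \<le> Tm \<Longrightarrow> phi (\<tau> - y) \<le> c"
      using near_l[OF l1 l2 h h Tm, of Tm] unfolding c_def by blast
    have c0: "0 \<le> c" using ll_nonneg h by (simp add: c_def)
    define B where "B x = exp h * (c * (x + h) + Cphi * ((1 - indicator {..Tm} x) * x + h))" for x
    have "(\<integral>x. g x * (Psi \<tau> - Psi (\<tau> - x)) \<partial>rho) \<le> (\<integral>x. g x * B x \<partial>rho)"
    proof (rule integral_mono_AE[OF integrable_gPsi])
      have "(\<lambda>x. g x * B x) = (\<lambda>x. (exp h * c + exp h * Cphi) * (g x * x) + (exp h * c * h + exp h * Cphi * h) * g x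
          - (exp h * Cphi) * (indicator {..Tm} x * (g x * x)))"
        by (auto simp: fun_eq_iff B_def algebra_simps)
      then show "integrable rho (\<lambda>x. g x * B x)"
        using integrable_gx integrable_g int_ind_gx by simp
      show "AE x in rho. g x * (Psi \<tau> - Psi (\<tau> - x)) \<le> g x * B x"
        using pos
      proof eventually_elim
        case (elim x)
        have "Psi \<tau> - Psi (\<tau> - x) \<le> B x"
        proof (cases "x \<le> Tm")
          case True
          have "Psi \<tau> - Psi (\<tau> - x) \<le> (x + h) * exp h * c"
            by (rule Psi_upper_interval[OF h c0 \<tau> elim True])
          moreover have "0 \<le> exp h * (Cphi * ((1 - indicator {..Tm} x) * x + h))"
            using Cphi_pos h True by simp
          ultimately show ?thesis by (simp add: B_def algebra_simps)
        next
          case False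
          have "Psi \<tau> - Psi (\<tau> - x) \<le> (x + h) * exp h * Cphi"
            by (rule Psi_upper_global[OF h elim])
          moreover have "0 \<le> exp h * (c * (x + h))"
            using c0 h elim by simp
          ultimately show ?thesis using False by (simp add: B_def algebra_simps)
        qed
        then show ?case using g_pos[of x] by (simp add: mult_left_mono)
      qed
    qed
    also have "(\<integral>x. g x * B x \<partial>rho) = exp h * (c * (mu + h) + Cphi * (mu - mT Tm + h))"
    proof -
      have "(\<integral>x. g x * B x \<partial>rho) = (\<integral>x. (exp h * c + exp h * Cphi) * (g x * x) + (exp h * c * h + exp h * Cphi * h) * g x
          - (exp h * Cphi) * (indicator {..Tm} x * (g x * x)) \<partial>rho)"
        by (intro Bochner_Integration.integral_cong refl) (simp add: B_def algebra_simps)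
      also have "\<dots> = (exp h * c + exp h * Cphi) * mu + (exp h * c * h + exp h * Cphi * h) * 1 - (exp h * Cphi) * mT Tm"
        using integrable_gx integrable_g int_ind_gx integral_g
        by (simp add: mu_def mT_def)
      also have "\<dots> = exp h * (c * (mu + h) + Cphi * (mu - mT Tm + h))" by (simp add: algebra_simps)
      finally show ?thesis .
    qed
    finally have up: "w \<tau> \<le> exp h * (c * (mu + h) + Cphi * (mu - mT Tm + h))"
      using Psi_identity[of \<tau>] by simp
    have "exp (-\<tau>) \<le> h"
    proof -
      have "1 + \<tau> \<le> exp \<tau>" by (rule exp_ge_add_one_self)
      then have "Tm \<le> exp \<tau>" using \<tau>1 by linarith
      then have "inverse (exp \<tau>) \<le> inverse Tm" using Tm by (intro le_imp_inverse_le) (auto simp: Tm_def)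
      then show ?thesis by (simp add: exp_minus h_def hh_def Tm_def)
    qed
    then have "1 - h \<le> w \<tau>" using \<tau>1 Tm by (simp add: w_def)
    with up show ?thesis by (simp add: G_def h_def Tm_def c_def)
  qed
  have hh0: "hh \<longlonglongrightarrow> 0" unfolding hh_def by (rule LIMSEQ_inverse_real_of_nat)
  have "G \<longlonglongrightarrow> exp 0 * (exp 0 * (ll + 0) * (mu + 0) + Cphi * (mu - mu + 0))"
    unfolding G_def[abs_def] by (intro tendsto_intros hh0 mT_tendsto)
  then have G: "G \<longlonglongrightarrow> ll * mu" by simp
  have "(\<lambda>n. 1 - hh n) \<longlonglongrightarrow> 1 - 0" by (intro tendsto_intros hh0)
  then show ?thesis using G Gge by (intro LIMSEQ_le[of "\<lambda>n. 1 - hh n" 1 G]) auto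
qed

lemma phi_conv: "\<forall>\<epsilon>>0. \<exists>t0. \<forall>t\<ge>t0. \<bar>phi t - 1 / mu\<bar> \<le> \<epsilon>"
proof (intro allI impI)
  fix \<epsilon> :: real assume e: "0 < \<epsilon>"
  have a: "LL \<le> 1 / mu" using LL_mu mu_pos by (simp add: field_simps)
  have c: "1 / mu \<le> ll" using ll_mu mu_pos by (simp add: field_simps)
  obtain s0 where s0: "\<And>t. t \<ge> s0 \<Longrightarrow> phi t \<le> LL + \<epsilon>" using L1 e by blast
  obtain s1 where s1: "\<And>t. t \<ge> s1 \<Longrightarrow> ll - \<epsilon> \<le> phi t" using l1 e by blast
  show "\<exists>t0. \<forall>t\<ge>t0. \<bar>phi t - 1 / mu\<bar> \<le> \<epsilon>"
  proof (intro exI[of _ "max s0 s1"] allI impI)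
    fix t assume "max s0 s1 \<le> t"
    then have "phi t \<le> LL + \<epsilon>" "ll - \<epsilon> \<le> phi t" using s0 s1 by auto
    then show "\<bar>phi t - 1 / mu\<bar> \<le> \<epsilon>" using a c by (simp add: abs_le_iff)
  qed
qed

end


lemma setupV:
  fixes M :: "'a measure" and b :: nat and Vv :: "'a \<Rightarrow> nat \<Rightarrow> real"
  assumes M: "prob_space M"
    and b: "b \<ge> 2"
    and meas: "\<And>i. i < b \<Longrightarrow> (\<lambda>\<omega>. Vv \<omega> i) \<in> borel_measurable M"
    and AEs: "AE \<omega> in M. (\<forall>i<b. Vv \<omega> i \<ge> 0) \<and> (\<Sum>i<b. Vv \<omega> i) = 1"
    and dist: "\<And>i. i < b \<Longrightarrow> distr M borel (\<lambda>\<omega>. Vv \<omega> i) = distr M borel (\<lambda>\<omega>. Vv \<omega> 0)"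
    and n0: "measure M {\<omega> \<in> space M. Vv \<omega> 0 = 0} = 0"
    and n1: "measure M {\<omega> \<in> space M. Vv \<omega> 0 = 1} = 0"
  shows "AE \<omega> in M. 0 < Vv \<omega> 0 \<and> Vv \<omega> 0 < 1"
    and "real b * (\<integral>\<omega>. Vv \<omega> 0 \<partial>M) = 1"
proof -
  interpret M: prob_space M by (rule M)
  have AE01: "AE \<omega> in M. \<forall>i<b. 0 \<le> Vv \<omega> i \<and> Vv \<omega> i \<le> 1"
    using AEs
  proof eventually_elim
    case (elim \<omega>)
    show ?case
    proof (intro allI impI conjI)
      fix i assume i: "i < b"
      show "0 \<le> Vv \<omega> i" using elim i by auto
      have "Vv \<omega> i \<le> (\<Sum>i<b. Vv \<omega> i)"
        by (rule member_le_sum) (use elim i in auto)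
      then show "Vv \<omega> i \<le> 1" using elim by simp
    qed
  qed
  have m0: "(\<lambda>\<omega>. Vv \<omega> 0) \<in> borel_measurable M" using meas b by simp
  have N0: "{\<omega> \<in> space M. Vv \<omega> 0 = 0} \<in> null_sets M"
    using n0 m0 by (auto simp: null_sets_def M.emeasure_eq_measure)
  have N1: "{\<omega> \<in> space M. Vv \<omega> 0 = 1} \<in> null_sets M"
    using n1 m0 by (auto simp: null_sets_def M.emeasure_eq_measure)
  have "AE \<omega> in M. Vv \<omega> 0 \<noteq> 0" by (rule AE_I'[OF N0]) auto
  moreover have "AE \<omega> in M. Vv \<omega> 0 \<noteq> 1" by (rule AE_I'[OF N1]) auto
  ultimately show "AE \<omega> in M. 0 < Vv \<omega> 0 \<and> Vv \<omega> 0 < 1"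
    using AE01
  proof eventually_elim
    case (elim \<omega>)
    then have "0 \<le> Vv \<omega> 0" "Vv \<omega> 0 \<le> 1" using b by auto
    then show ?case using elim by auto
  qed
  have int: "integrable M (\<lambda>\<omega>. Vv \<omega> i)" if "i < b" for i
  proof (rule M.integrable_const_bound[where B=1])
    show "AE \<omega> in M. norm (Vv \<omega> i) \<le> 1" using AE01 by eventually_elim (use that in auto)
  qed (rule meas[OF that])
  have eqi: "(\<integral>\<omega>. Vv \<omega> i \<partial>M) = (\<integral>\<omega>. Vv \<omega> 0 \<partial>M)" if "i < b" for i
  proof -
    have "(\<integral>\<omega>. Vv \<omega> i \<partial>M) = (\<integral>x. x \<partial>distr M borel (\<lambda>\<omega>. Vv \<omega> i))"
      by (rule integral_distr[symmetric]) (use meas[OF that] in auto)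
    also have "\<dots> = (\<integral>x. x \<partial>distr M borel (\<lambda>\<omega>. Vv \<omega> 0))" using dist[OF that] by simp
    also have "\<dots> = (\<integral>\<omega>. Vv \<omega> 0 \<partial>M)"
      by (rule integral_distr) (use m0 in auto)
    finally show ?thesis .
  qed
  have "(\<integral>\<omega>. (\<Sum>i<b. Vv \<omega> i) \<partial>M) = (\<integral>\<omega>. 1 \<partial>M)"
  proof (rule integral_cong_AE)
    show "(\<lambda>\<omega>. \<Sum>i<b. Vv \<omega> i) \<in> borel_measurable M"
      by (rule borel_measurable_sum) (rule meas, simp)
    show "AE \<omega> in M. (\<Sum>i<b. Vv \<omega> i) = 1" using AEs by eventually_elim simp
  qed simp
  moreover have "(\<integral>\<omega>. (\<Sum>i<b. Vv \<omega> i) \<partial>M) = (\<Sum>i<b. (\<integral>\<omega>. Vv \<omega> i \<partial>M))"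
    by (rule Bochner_Integration.integral_sum) (rule int, simp)
  ultimately have "(\<Sum>i<b. (\<integral>\<omega>. Vv \<omega> i \<partial>M)) = 1"
    by (simp add: M.prob_space)
  moreover have "(\<Sum>i<b. (\<integral>\<omega>. Vv \<omega> i \<partial>M)) = (\<Sum>i<b. (\<integral>\<omega>. Vv \<omega> 0 \<partial>M))"
    by (rule sum.cong[OF refl]) (rule eqi, simp)
  ultimately show "real b * (\<integral>\<omega>. Vv \<omega> 0 \<partial>M) = 1" by simp
qed


lemma renewal_setup:
  fixes M :: "'a measure" and b :: nat and V0 :: "'a \<Rightarrow> real"
  assumes M: "prob_space M" and b: "b \<ge> 2"
    and m0: "V0 \<in> borel_measurable M"
    and AEV: "AE \<omega> in M. 0 < V0 \<omega> \<and> V0 \<omega> < 1"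
    and EV: "real b * (\<integral>\<omega>. V0 \<omega> \<partial>M) = 1"
    and nl: "\<not> lattice_law (distr M borel (\<lambda>\<omega>. - ln (V0 \<omega>)))"
  shows "renewal_nl (distr M borel (\<lambda>\<omega>. - ln (V0 \<omega>))) (real b)"
proof -
  interpret M: prob_space M by (rule M)
  have Xm: "(\<lambda>\<omega>. - ln (V0 \<omega>)) \<in> borel_measurable M" using m0 by measurable
  show ?thesis
  proof (intro renewal_nl.intro renewal.intro renewal_nl_axioms.intro renewal_axioms.intro)
    show "prob_space (distr M borel (\<lambda>\<omega>. - ln (V0 \<omega>)))" by (rule M.prob_space_distr[OF Xm])
    show "sets (distr M borel (\<lambda>\<omega>. - ln (V0 \<omega>))) = sets borel" by simp
    show "AE x in distr M borel (\<lambda>\<omega>. - ln (V0 \<omega>)). 0 < x"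
    proof (subst AE_distr_iff[OF Xm])
      show "{x \<in> space borel. 0 < (x::real)} \<in> sets borel" by measurable
      show "AE x in M. 0 < - ln (V0 x)" using AEV by eventually_elim (simp add: ln_less_zero)
    qed
    show "1 \<le> real b" using b by simp
    have "(\<integral>x. real b * exp (- x) \<partial>distr M borel (\<lambda>\<omega>. - ln (V0 \<omega>))) = (\<integral>\<omega>. real b * exp (- (- ln (V0 \<omega>))) \<partial>M)"
      by (rule integral_distr[OF Xm]) measurable
    also have "\<dots> = (\<integral>\<omega>. real b * V0 \<omega> \<partial>M)"
    proof (rule integral_cong_AE)
      show "(\<lambda>\<omega>. real b * exp (- (- ln (V0 \<omega>)))) \<in> borel_measurable M" using m0 by measurable
      show "(\<lambda>\<omega>. real b * V0 \<omega>) \<in> borel_measurable M" using m0 by measurable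
      show "AE \<omega> in M. real b * exp (- (- ln (V0 \<omega>))) = real b * V0 \<omega>" using AEV by eventually_elim simp
    qed
    also have "\<dots> = 1" using EV by simp
    finally show "(\<integral>x. real b * exp (- x) \<partial>distr M borel (\<lambda>\<omega>. - ln (V0 \<omega>))) = 1" .
    show "\<not> lattice_law (distr M borel (\<lambda>\<omega>. - ln (V0 \<omega>)))" by (rule nl)
  qed
qed

lemma mu_setup:
  fixes M :: "'a measure" and b :: nat and V0 :: "'a \<Rightarrow> real"
  assumes R: "renewal_nl (distr M borel (\<lambda>\<omega>. - ln (V0 \<omega>))) (real b)"
    and M: "prob_space M"
    and m0: "V0 \<in> borel_measurable M"
    and AEV: "AE \<omega> in M. 0 < V0 \<omega> \<and> V0 \<omega> < 1"
  shows "renewal.mu (distr M borel (\<lambda>\<omega>. - ln (V0 \<omega>))) (real b) = real b * (\<integral>\<omega>. - V0 \<omega> * ln (V0 \<omega>) \<partial>M)"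
proof -
  interpret R: renewal_nl "distr M borel (\<lambda>\<omega>. - ln (V0 \<omega>))" "real b" by (rule R)
  have Xm: "(\<lambda>\<omega>. - ln (V0 \<omega>)) \<in> borel_measurable M" using m0 by measurable
  have "R.mu = (\<integral>x. real b * exp (- x) * x \<partial>distr M borel (\<lambda>\<omega>. - ln (V0 \<omega>)))"
    by (simp add: R.mu_def R.g_def)
  also have "\<dots> = (\<integral>\<omega>. real b * exp (- (- ln (V0 \<omega>))) * (- ln (V0 \<omega>)) \<partial>M)"
    by (rule integral_distr[OF Xm]) measurable
  also have "\<dots> = (\<integral>\<omega>. real b * (- V0 \<omega> * ln (V0 \<omega>)) \<partial>M)"
  proof (rule integral_cong_AE)
    show "(\<lambda>\<omega>. real b * exp (- (- ln (V0 \<omega>))) * (- ln (V0 \<omega>))) \<in> borel_measurable M" using m0 by measurable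
    show "(\<lambda>\<omega>. real b * (- V0 \<omega> * ln (V0 \<omega>))) \<in> borel_measurable M" using m0 by measurable
    show "AE \<omega> in M. real b * exp (- (- ln (V0 \<omega>))) * (- ln (V0 \<omega>)) = real b * (- V0 \<omega> * ln (V0 \<omega>))"
      using AEV by eventually_elim simp
  qed
  also have "\<dots> = real b * (\<integral>\<omega>. - V0 \<omega> * ln (V0 \<omega>) \<partial>M)" by simp
  finally show ?thesis .
qed


lemma W_setup:
  fixes M :: "'a measure" and b :: nat and V0 :: "'a \<Rightarrow> real" and W :: "nat \<Rightarrow> 'a \<Rightarrow> real"
  assumes R: "renewal_nl (distr M borel (\<lambda>\<omega>. - ln (V0 \<omega>))) (real b)"
    and M: "prob_space M"
    and m0: "V0 \<in> borel_measurable M"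
    and AEV: "AE \<omega> in M. 0 < V0 \<omega> \<and> V0 \<omega> < 1"
    and ind: "prob_space.indep_vars M (\<lambda>_. borel) W {1..}"
    and Wd: "\<And>j. j \<ge> 1 \<Longrightarrow> distr M borel (W j) = distr M borel V0"
  shows "renewal.Tn (distr M borel (\<lambda>\<omega>. - ln (V0 \<omega>))) (real b) k (renewal.z) t =
      exp (-t) * real b ^ k * measure M {\<omega> \<in> space M. (\<Sum>j\<in>{1..k}. - ln (W j \<omega>)) \<le> t}"
proof -
  interpret M: prob_space M by (rule M)
  define rho where "rho = distr M borel (\<lambda>\<omega>. - ln (V0 \<omega>))"
  interpret R: renewal_nl rho "real b" using R by (simp add: rho_def)
  have Wm: "W j \<in> borel_measurable M" if "j \<ge> 1" for j
    using ind that unfolding M.indep_vars_def by auto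
  define X where "X j \<omega> = - ln (W j \<omega>)" for j \<omega>
  have Xm: "X j \<in> borel_measurable M" if "j \<ge> 1" for j
    using Wm[OF that] unfolding X_def[abs_def] by measurable
  have Xd: "distr M borel (X j) = rho" if "j \<ge> 1" for j
  proof -
    have "distr M borel (X j) = distr (distr M borel (W j)) borel (\<lambda>x. - ln x)"
      by (subst distr_distr) (use Wm[OF that] in \<open>auto simp: X_def[abs_def] comp_def\<close>)
    also have "\<dots> = distr (distr M borel V0) borel (\<lambda>x. - ln x)" using Wd[OF that] by simp
    also have "\<dots> = rho"
      by (subst distr_distr) (use m0 in \<open>auto simp: rho_def comp_def\<close>)
    finally show ?thesis .
  qed
  have indX: "M.indep_vars (\<lambda>_. borel) X {1..}"
    unfolding X_def[abs_def] by (rule M.indep_vars_compose2[OF ind]) measurable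
  define S where "S k \<omega> = (\<Sum>j\<in>{1..k}. X j \<omega>)" for k \<omega>
  have Sm: "S k \<in> borel_measurable M" for k
    unfolding S_def[abs_def] by (rule borel_measurable_sum) (use Xm in auto)
  define P where "P k t = measure M {\<omega> \<in> space M. S k \<omega> \<le> t}" for k t
  have Pmono: "mono (P k)" for k
  proof (rule monoI)
    fix x y :: real assume xy: "x \<le> y"
    have "{\<omega> \<in> space M. S k \<omega> \<le> y} \<in> sets M" using Sm[of k] by measurable
    then show "P k x \<le> P k y" unfolding P_def using xy by (intro M.finite_measure_mono) auto
  qed
  have Pm: "P k \<in> borel_measurable borel" for k by (rule borel_measurable_mono[OF Pmono])
  have P01: "0 \<le> P k t \<and> P k t \<le> 1" for k t by (simp add: P_def)
  have P0: "P 0 t = R.H t" for t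
    by (cases "0 \<le> t") (auto simp: P_def S_def R.H_def M.prob_space)
  have Prec: "P (Suc k) t = (\<integral>x. P k (t - x) \<partial>rho)" for k t
  proof -
    have iv: "M.indep_var borel (X (Suc k)) borel (\<lambda>\<omega>. \<Sum>i\<in>{1..k}. X i \<omega>)"
      by (rule M.indep_vars_sum) (auto intro: M.indep_vars_subset[OF indX])
    then have iv': "M.indep_var borel (X (Suc k)) borel (S k)" by (simp add: S_def[abs_def])
    define nu where "nu = distr M borel (S k)"
    interpret nu: prob_space nu unfolding nu_def by (rule M.prob_space_distr[OF Sm])
    have joint: "rho \<Otimes>\<^sub>M nu = distr M (borel \<Otimes>\<^sub>M borel) (\<lambda>\<omega>. (X (Suc k) \<omega>, S k \<omega>))"
      using iv' Xd[of "Suc k"] unfolding M.indep_var_distribution_eq nu_def by simp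
    define A where "A = {p \<in> space (borel \<Otimes>\<^sub>M borel). fst p + snd p \<le> (t::real)}"
    have A: "A \<in> sets (borel \<Otimes>\<^sub>M borel)" unfolding A_def by measurable
    have pm: "(\<lambda>\<omega>. (X (Suc k) \<omega>, S k \<omega>)) \<in> measurable M (borel \<Otimes>\<^sub>M borel)"
      using Xm[of "Suc k"] Sm[of k] by measurable
    have SSuc: "S (Suc k) \<omega> = X (Suc k) \<omega> + S k \<omega>" for \<omega>
      by (simp add: S_def add.commute)
    have "P (Suc k) t = measure M ((\<lambda>\<omega>. (X (Suc k) \<omega>, S k \<omega>)) -` A \<inter> space M)"
      unfolding P_def by (intro arg_cong[where f="measure M"]) (auto simp: A_def SSuc space_pair_measure)
    also have "\<dots> = measure (rho \<Otimes>\<^sub>M nu) A"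
      unfolding joint by (rule measure_distr[symmetric, OF pm A])
    also have "\<dots> = (\<integral>x. P k (t - x) \<partial>rho)"
    proof -
      have sA: "A \<in> sets (rho \<Otimes>\<^sub>M nu)"
        using A by (simp add: nu_def sets_pair_measure_cong[OF R.sets_rho refl] cong: sets_pair_measure_cong)
      have "emeasure (rho \<Otimes>\<^sub>M nu) A = (\<integral>\<^sup>+x. emeasure nu (Pair x -` A) \<partial>rho)"
        by (rule nu.emeasure_pair_measure_alt[OF sA])
      also have "\<dots> = (\<integral>\<^sup>+x. ennreal (P k (t - x)) \<partial>rho)"
      proof (rule nn_integral_cong)
        fix x
        have "Pair x -` A = {s. s \<le> t - x}" by (auto simp: A_def space_pair_measure)
        then have "emeasure nu (Pair x -` A) = emeasure M (S k -` {s. s \<le> t - x} \<inter> space M)"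
          unfolding nu_def by (subst emeasure_distr) (auto simp: Sm)
        also have "\<dots> = ennreal (P k (t - x))"
          by (simp add: P_def M.emeasure_eq_measure vimage_def Int_def conj_commute)
        finally show "emeasure nu (Pair x -` A) = ennreal (P k (t - x))" .
      qed
      also have "\<dots> = ennreal (\<integral>x. P k (t - x) \<partial>rho)"
      proof (rule nn_integral_eq_integral)
        show "integrable rho (\<lambda>x. P k (t - x))"
          by (rule R.integrable_const_bound[where B=1]) (use P01 Pm in \<open>auto simp: R.meas_rho\<close>)
      qed (use P01 in auto)
      finally have "emeasure (rho \<Otimes>\<^sub>M nu) A = ennreal (\<integral>x. P k (t - x) \<partial>rho)" .
      moreover have "0 \<le> (\<integral>x. P k (t - x) \<partial>rho)" using P01 by (simp add: integral_nonneg)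
      ultimately show ?thesis by (simp add: measure_def)
    qed
    finally show ?thesis .
  qed
  have main: "R.Tn k R.z t = exp (-t) * real b ^ k * P k t" for k t
  proof (induction k arbitrary: t)
    case 0
    then show ?case by (cases "0 \<le> t") (auto simp: P0 R.z_def R.H_def)
  next
    case (Suc k)
    have "R.Tn (Suc k) R.z t = (\<integral>x. R.g x * R.Tn k R.z (t - x) \<partial>rho)"
      by (simp add: R.Tn_Suc R.T_def)
    also have "\<dots> = (\<integral>x. (exp (-t) * real b ^ Suc k) * P k (t - x) \<partial>rho)"
      by (intro Bochner_Integration.integral_cong refl)
         (simp add: Suc R.g_def exp_diff exp_minus field_simps)
    also have "\<dots> = exp (-t) * real b ^ Suc k * P (Suc k) t"
      by (simp add: Prec)
    finally show ?case .
  qed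
  show ?thesis using main[of k t] by (simp add: rho_def P_def S_def X_def)
qed


lemma event_eq:
  fixes M :: "'a measure" and W :: "nat \<Rightarrow> 'a \<Rightarrow> real" and n K :: real
  assumes M: "prob_space M"
    and Wm: "\<And>j. j \<ge> 1 \<Longrightarrow> W j \<in> borel_measurable M"
    and Wpos: "\<And>j. j \<ge> 1 \<Longrightarrow> AE \<omega> in M. 0 < W j \<omega>"
    and n: "0 < n" and K: "0 < K"
  shows "measure M {\<omega> \<in> space M. n * (\<Prod>j\<in>{1..k}. W j \<omega>) \<ge> K} =
         measure M {\<omega> \<in> space M. (\<Sum>j\<in>{1..k}. - ln (W j \<omega>)) \<le> ln (n / K)}"
proof (rule measure_eq_AE)
  have "AE \<omega> in M. \<forall>j\<in>{1..k}. 0 < W j \<omega>"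
    by (rule AE_finite_allI) (auto intro: Wpos)
  then show "AE \<omega> in M. (\<omega> \<in> {\<omega> \<in> space M. n * (\<Prod>j\<in>{1..k}. W j \<omega>) \<ge> K}) =
      (\<omega> \<in> {\<omega> \<in> space M. (\<Sum>j\<in>{1..k}. - ln (W j \<omega>)) \<le> ln (n / K)})"
  proof eventually_elim
    case (elim \<omega>)
    define Sm where "Sm = (\<Sum>j\<in>{1..k}. - ln (W j \<omega>))"
    have "(\<Prod>j\<in>{1..k}. W j \<omega>) = (\<Prod>j\<in>{1..k}. exp (ln (W j \<omega>)))"
      by (rule prod.cong[OF refl]) (use elim in simp)
    also have "\<dots> = exp (\<Sum>j\<in>{1..k}. ln (W j \<omega>))" by (rule exp_sum[symmetric]) simp
    also have "\<dots> = exp (- Sm)" by (simp add: Sm_def sum_negf)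
    finally have pe: "(\<Prod>j\<in>{1..k}. W j \<omega>) = exp (- Sm)" .
    have "K \<le> n * exp (- Sm) \<longleftrightarrow> K / n \<le> exp (- Sm)" using n by (simp add: field_simps)
    also have "\<dots> \<longleftrightarrow> ln (K / n) \<le> - Sm" using n K by (subst ln_le_cancel_iff[symmetric]) auto
    also have "ln (K / n) = - ln (n / K)" using n K by (simp add: ln_div)
    finally have key: "K \<le> n * exp (- Sm) \<longleftrightarrow> Sm \<le> ln (n / K)" by linarith
    show ?case unfolding mem_Collect_eq pe Sm_def[symmetric] using key by blast
  qed
  show "{\<omega> \<in> space M. n * (\<Prod>j\<in>{1..k}. W j \<omega>) \<ge> K} \<in> sets M"
    using Wm by measurable
  show "{\<omega> \<in> space M. (\<Sum>j\<in>{1..k}. - ln (W j \<omega>)) \<le> ln (n / K)} \<in> sets M"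
    using Wm by measurable
qed


theorem corollary3:
  fixes M :: "'a measure" and b :: nat
    and Vv :: "'a \<Rightarrow> nat \<Rightarrow> real"
    and W :: "nat \<Rightarrow> 'a \<Rightarrow> real"
  assumes "prob_space M"
    and "b \<ge> 2"
    and "\<And>i. i < b \<Longrightarrow> (\<lambda>\<omega>. Vv \<omega> i) \<in> borel_measurable M"
    and "AE \<omega> in M. (\<forall>i<b. Vv \<omega> i \<ge> 0) \<and> (\<Sum>i<b. Vv \<omega> i) = 1"
    and "\<And>i. i < b \<Longrightarrow> distr M borel (\<lambda>\<omega>. Vv \<omega> i) = distr M borel (\<lambda>\<omega>. Vv \<omega> 0)"
    and "measure M {\<omega> \<in> space M. Vv \<omega> 0 = 0} = 0"
    and "measure M {\<omega> \<in> space M. Vv \<omega> 0 = 1} = 0"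
    and "\<not> lattice_law (distr M borel (\<lambda>\<omega>. - ln (Vv \<omega> 0)))"
    and "prob_space.indep_vars M (\<lambda>_. borel) W {1..}"
    and "\<And>j. j \<ge> 1 \<Longrightarrow> distr M borel (W j) = distr M borel (\<lambda>\<omega>. Vv \<omega> 0)"
  shows "\<forall>\<epsilon>>0. \<exists>R. \<forall>n K :: real. K > 0 \<longrightarrow> n / K \<ge> R \<longrightarrow>
           (let f = (\<lambda>k. real b ^ k * measure M {\<omega> \<in> space M. n * (\<Prod>j\<in>{1..k}. W j \<omega>) \<ge> K});
                \<mu> = real b * (\<integral>\<omega>. - Vv \<omega> 0 * ln (Vv \<omega> 0) \<partial>M)
            in summable f \<and> \<bar>(K / n) * (\<Sum>k. f k) - 1 / \<mu>\<bar> \<le> \<epsilon>)"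
proof -
  interpret M: prob_space M by (rule assms(1))
  define V0 where "V0 = (\<lambda>\<omega>. Vv \<omega> 0)"
  have m0: "V0 \<in> borel_measurable M" using assms(3)[of 0] assms(2) by (simp add: V0_def)
  have AEV: "AE \<omega> in M. 0 < V0 \<omega> \<and> V0 \<omega> < 1"
    using setupV(1)[OF assms(1-7)] by (simp add: V0_def)
  have EV: "real b * (\<integral>\<omega>. V0 \<omega> \<partial>M) = 1"
    using setupV(2)[OF assms(1-7)] by (simp add: V0_def)
  have nl: "\<not> lattice_law (distr M borel (\<lambda>\<omega>. - ln (V0 \<omega>)))" using assms(8) by (simp add: V0_def)
  have RR: "renewal_nl (distr M borel (\<lambda>\<omega>. - ln (V0 \<omega>))) (real b)"
    by (rule renewal_setup[OF assms(1) assms(2) m0 AEV EV nl])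
  interpret RN: renewal_nl "distr M borel (\<lambda>\<omega>. - ln (V0 \<omega>))" "real b" by (rule RR)
  have mu: "RN.mu = real b * (\<integral>\<omega>. - Vv \<omega> 0 * ln (Vv \<omega> 0) \<partial>M)"
    using mu_setup[OF RR assms(1) m0 AEV] by (simp add: V0_def)
  have Wd: "distr M borel (W j) = distr M borel V0" if "j \<ge> 1" for j
    using assms(10)[OF that] by (simp add: V0_def)
  have Wm: "W j \<in> borel_measurable M" if "j \<ge> 1" for j
    using assms(9) that unfolding M.indep_vars_def by auto
  have Wpos: "AE \<omega> in M. 0 < W j \<omega>" if j: "j \<ge> 1" for j
  proof -
    have "AE x in distr M borel V0. 0 < x"
    proof (subst AE_distr_iff[OF m0])
      show "{x \<in> space borel. 0 < (x::real)} \<in> sets borel" by measurable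
      show "AE x in M. 0 < V0 x" using AEV by eventually_elim simp
    qed
    then have "AE x in distr M borel (W j). 0 < x" unfolding Wd[OF j] .
    then show ?thesis
      by (subst (asm) AE_distr_iff[OF Wm[OF j]]) (simp_all, measurable)
  qed
  have Tn: "RN.Tn k RN.z t = exp (-t) * real b ^ k * measure M {\<omega> \<in> space M. (\<Sum>j\<in>{1..k}. - ln (W j \<omega>)) \<le> t}" for k t
    by (rule W_setup[OF RR assms(1) m0 AEV assms(9) Wd])
  show ?thesis
  proof (intro allI impI)
    fix \<epsilon> :: real assume e: "\<epsilon> > 0"
    obtain t0 where t0: "\<And>t. t \<ge> t0 \<Longrightarrow> \<bar>RN.phi t - 1 / RN.mu\<bar> \<le> \<epsilon>" using RN.phi_conv e by blast
    show "\<exists>R. \<forall>n K :: real. K > 0 \<longrightarrow> n / K \<ge> R \<longrightarrow>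
           (let f = (\<lambda>k. real b ^ k * measure M {\<omega> \<in> space M. n * (\<Prod>j\<in>{1..k}. W j \<omega>) \<ge> K});
                \<mu> = real b * (\<integral>\<omega>. - Vv \<omega> 0 * ln (Vv \<omega> 0) \<partial>M)
            in summable f \<and> \<bar>(K / n) * (\<Sum>k. f k) - 1 / \<mu>\<bar> \<le> \<epsilon>)"
    proof (intro exI[of _ "max 1 (exp t0)"] allI impI)
      fix n K :: real assume K: "0 < K" and nK: "max 1 (exp t0) \<le> n / K"
      have nK1: "1 \<le> n / K" using nK by simp
      then have n: "0 < n" using K by (simp add: field_simps)
      define t where "t = ln (n / K)"
      have et: "exp t = n / K" using n K by (simp add: t_def)
      have tt: "t0 \<le> t"
      proof -
        have "exp t0 \<le> n / K" using nK by simp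
        then show ?thesis unfolding t_def using n K by (subst ln_ge_iff) auto
      qed
      define f where "f = (\<lambda>k. real b ^ k * measure M {\<omega> \<in> space M. n * (\<Prod>j\<in>{1..k}. W j \<omega>) \<ge> K})"
      have feq: "f k = exp t * RN.Tn k RN.z t" for k
      proof -
        have "f k = real b ^ k * measure M {\<omega> \<in> space M. (\<Sum>j\<in>{1..k}. - ln (W j \<omega>)) \<le> t}"
          unfolding f_def t_def by (subst event_eq[OF assms(1) Wm Wpos n K]) auto
        also have "\<dots> = exp t * RN.Tn k RN.z t" by (simp add: Tn exp_minus)
        finally show ?thesis .
      qed
      have f_fun: "f = (\<lambda>k. exp t * RN.Tn k RN.z t)" using feq by (simp add: fun_eq_iff)
      have sumf: "summable f"
        unfolding f_fun by (intro summable_mult RN.Ser_summable[OF RN.z_facts])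
      have "(K / n) * (\<Sum>k. f k) = (K / n) * (exp t * RN.phi t)"
        unfolding f_fun RN.phi_def RN.Ser_def by (simp add: suminf_mult[OF RN.Ser_summable[OF RN.z_facts]])
      also have "\<dots> = RN.phi t" using et n K by simp
      finally have "\<bar>(K / n) * (\<Sum>k. f k) - 1 / (real b * (\<integral>\<omega>. - Vv \<omega> 0 * ln (Vv \<omega> 0) \<partial>M))\<bar> \<le> \<epsilon>"
        using t0[OF tt] mu by simp
      then show "let f = (\<lambda>k. real b ^ k * measure M {\<omega> \<in> space M. n * (\<Prod>j\<in>{1..k}. W j \<omega>) \<ge> K});
                \<mu> = real b * (\<integral>\<omega>. - Vv \<omega> 0 * ln (Vv \<omega> 0) \<partial>M)
            in summable f \<and> \<bar>(K / n) * (\<Sum>k. f k) - 1 / \<mu>\<bar> \<le> \<epsilon>"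
        using sumf unfolding f_def Let_def by simp
    qed
  qed
qed


end
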